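(* Let $K$ be a non-Archimedean locally compact field of characteristic $p>0$ with group of 1-units $U=1+M_K$. Let $\Lambda_0$ be the set of group automorphisms $f:U\to U$ that are locally analytic on $U$. Then $(\Lambda_0,\circ)$ is isomorphic to $(\mathbb{Z}_p^*,\cdot)$ (via $y\mapsto(u\mapsto u^y)$).
   Context: $M_K$ is the maximal ideal of the ring of integers $R_K$ of $K$; with constant field $\mathbb{F}$ of order $q$ and uniformizer $\pi$, $K=\mathbb{F}((\pi))$ and $U=1+\pi\mathbb{F}[[\pi]]$, with absolute value $|x|=q^{-v(x)}$. A continuous function $f$ on a ball $B_{\alpha,t}=\{u\in R_K:|u-\alpha|\le t\}$, $t=|\rho|$, is analytic there if $f(u)=\sum_{n\ge0}c_n\left(\frac{u-\alpha}{\rho}\right)^n$ with $c_n\in K$, $c_n\to0$; $f:U\to K$ is locally analytic if each $\alpha\in U$ has a ball $B_{\alpha,t_\alpha}\subset U$, $t_\alpha>0$, on which $f$ is analytic. For $y\in\mathbb{Z}_p$ and $u=1+x\in U$, $u^y=\sum_{n\ge0}\binom{y}{n}x^n$. $\mathbb{Z}_p^*$ denotes the group of $p$-adic units. *)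

theory Defs
  imports "HOL-Computational_Algebra.Formal_Laurent_Series" "HOL-Algebra.Group" "HOL-Library.FuncSet"
begin

text \<open>The local field K = F((pi)) is modelled as the type of formal Laurent series
  over a finite field 'a (the constant field F, of order q = CARD('a)); its
  characteristic is p = CHAR('a).  Valuation v = fls_subdegree, |x| = q^(-v x).\<close>

text \<open>small m x  iff  |x| <= q^(-m)  (i.e. v(x) >= m, with v(0) = infinity).\<close>
definition small :: "int \<Rightarrow> 'a::field fls \<Rightarrow> bool" where
  "small m x \<longleftrightarrow> x = 0 \<or> m \<le> fls_subdegree x"

definition fls_lim :: "(nat \<Rightarrow> 'a::field fls) \<Rightarrow> 'a fls \<Rightarrow> bool" where
  "fls_lim s L \<longleftrightarrow> (\<forall>m::int. \<exists>N. \<forall>n\<ge>N. small m (s n - L))"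

definition fls_sums :: "(nat \<Rightarrow> 'a::field fls) \<Rightarrow> 'a fls \<Rightarrow> bool" where
  "fls_sums c S \<longleftrightarrow> fls_lim (\<lambda>N. \<Sum>n<N. c n) S"

definition RK :: "'a::field fls set" where
  "RK = {u. small 0 u}"

definition one_units :: "'a::field fls set" where
  "one_units = {u. small 1 (u - 1)}"

text \<open>Closed ball B_{alpha,t} = {u in R_K. |u - alpha| <= t}, with t = |rho|.\<close>
definition fls_ball :: "'a::field fls \<Rightarrow> 'a fls \<Rightarrow> 'a fls set" where
  "fls_ball \<alpha> \<rho> = {u \<in> RK. small (fls_subdegree \<rho>) (u - \<alpha>)}"

definition analytic_on_ball :: "('a::field fls \<Rightarrow> 'a fls) \<Rightarrow> 'a fls \<Rightarrow> 'a fls \<Rightarrow> bool" where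
  "analytic_on_ball f \<alpha> \<rho> \<longleftrightarrow>
     (\<exists>c :: nat \<Rightarrow> 'a fls. fls_lim c 0 \<and>
        (\<forall>u \<in> fls_ball \<alpha> \<rho>. fls_sums (\<lambda>n. c n * ((u - \<alpha>) / \<rho>) ^ n) (f u)))"

definition locally_analytic_U :: "('a::field fls \<Rightarrow> 'a fls) \<Rightarrow> bool" where
  "locally_analytic_U f \<longleftrightarrow>
     (\<forall>\<alpha> \<in> one_units. \<exists>\<rho>. \<rho> \<noteq> 0 \<and> fls_ball \<alpha> \<rho> \<subseteq> one_units \<and> analytic_on_ball f \<alpha> \<rho>)"

text \<open>p-adic integers Z_p as compatible sequences of residues y k in {0..<p^k}.\<close>
definition Zp :: "nat \<Rightarrow> (nat \<Rightarrow> int) set" where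
  "Zp p = {y. \<forall>k. 0 \<le> y k \<and> y k < int p ^ k \<and> y k = y (Suc k) mod int p ^ k}"

definition Zp_mult :: "nat \<Rightarrow> (nat \<Rightarrow> int) \<Rightarrow> (nat \<Rightarrow> int) \<Rightarrow> nat \<Rightarrow> int" where
  "Zp_mult p y z = (\<lambda>k. (y k * z k) mod int p ^ k)"

definition Zp_one :: "nat \<Rightarrow> nat \<Rightarrow> int" where
  "Zp_one p = (\<lambda>k. 1 mod int p ^ k)"

text \<open>Units Z_p^*: elements not divisible by p.\<close>
definition Zp_units :: "nat \<Rightarrow> (nat \<Rightarrow> int) set" where
  "Zp_units p = {y \<in> Zp p. y 1 \<noteq> 0}"

definition Zp_units_group :: "nat \<Rightarrow> (nat \<Rightarrow> int) monoid" where
  "Zp_units_group p = \<lparr>carrier = Zp_units p, mult = Zp_mult p, one = Zp_one p\<rparr>"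

text \<open>The p-adic binomial coefficient binom(y,n) in Z_p: its residue mod p^k is
  (Y choose n) mod p^k for any natural Y congruent to y mod p^(k+n).\<close>
definition Zp_binom :: "nat \<Rightarrow> (nat \<Rightarrow> int) \<Rightarrow> nat \<Rightarrow> nat \<Rightarrow> int" where
  "Zp_binom p y n = (\<lambda>k. int ((nat (y (k + n)) choose n) mod p ^ k))"

text \<open>u^y = sum_n binom(y,n) x^n for u = 1 + x, binom(y,n) read in F via Z_p -> F_p.\<close>
definition Zp_pow :: "(nat \<Rightarrow> int) \<Rightarrow> 'a::field fls \<Rightarrow> 'a fls" where
  "Zp_pow y u = (THE S. fls_sums (\<lambda>n. of_int (Zp_binom CHAR('a) y n 1) * (u - 1) ^ n) S)"

definition Lambda0 :: "('a::field fls \<Rightarrow> 'a fls) set" where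
  "Lambda0 = {f. f \<in> extensional one_units \<and> bij_betw f one_units one_units \<and>
                 (\<forall>u \<in> one_units. \<forall>v \<in> one_units. f (u * v) = f u * f v) \<and>
                 locally_analytic_U f}"

definition Lambda0_group :: "('a::field fls \<Rightarrow> 'a fls) monoid" where
  "Lambda0_group = \<lparr>carrier = Lambda0, mult = (\<lambda>f g. restrict (f \<circ> g) one_units),
                     one = restrict id one_units\<rparr>"

end

theory Submission
  imports Defs
begin
unbundle fps_syntax


lemma prime_char: "prime CHAR('a::{field,finite})"
  by (intro prime_CHAR_semidom finite_imp_CHAR_pos) simp

lemma frob_add: fixes x y :: "'b::comm_semiring_1"
  assumes "prime CHAR('b)" shows "(x + y) ^ CHAR('b) = x ^ CHAR('b) + y ^ CHAR('b)"
  using freshmans_dream[OF assms] by simp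

lemma frob_inj: fixes x y :: "'b::idom"
  assumes "prime CHAR('b)" "x ^ CHAR('b) = y ^ CHAR('b)" shows "x = y"
proof -
  have "(x + (-y)) ^ CHAR('b) = x ^ CHAR('b) + (-y) ^ CHAR('b)" using frob_add[OF assms(1)] .
  also have "(-y) ^ CHAR('b) = - (y ^ CHAR('b))" using minus_power_prime_CHAR assms(1) by blast
  finally have "(x - y) ^ CHAR('b) = 0" using assms(2) by simp
  thus ?thesis by simp
qed



lemma small_iff: "small m x \<longleftrightarrow> (\<forall>i<m. x $$ i = 0)"
  unfolding small_def
  by (metis fls_eq0_below_subdegree fls_subdegree_geI fls_zero_nth le_less_trans not_le)

lemma fls_lim_iff: "fls_lim s L \<longleftrightarrow> (\<forall>m. \<exists>N. \<forall>n\<ge>N. \<forall>i<m. s n $$ i = L $$ i)"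
  unfolding fls_lim_def small_iff by simp

lemma fls_lim_unique: assumes "fls_lim s L" "fls_lim s L'" shows "L = L'"
proof (rule fls_eqI)
  fix i
  from assms(1) obtain N1 where N1: "\<forall>n\<ge>N1. \<forall>j<i+1. s n $$ j = L $$ j" unfolding fls_lim_iff by blast
  from assms(2) obtain N2 where N2: "\<forall>n\<ge>N2. \<forall>j<i+1. s n $$ j = L' $$ j" unfolding fls_lim_iff by blast
  have "s (max N1 N2) $$ i = L $$ i" using N1 by simp
  moreover have "s (max N1 N2) $$ i = L' $$ i" using N2 by simp
  ultimately show "L $$ i = L' $$ i" by simp
qed

lemma fls_sums_unique: "fls_sums c S \<Longrightarrow> fls_sums c S' \<Longrightarrow> S = S'"
  unfolding fls_sums_def by (rule fls_lim_unique)

lemma the_sums: "fls_sums c S \<Longrightarrow> (THE S. fls_sums c S) = S"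
  using fls_sums_unique by blast

lemma regpart_small1:
  assumes "small 1 x"
  shows "fps_to_fls (fls_regpart x) = x" "fls_regpart x $ 0 = 0"
proof -
  have h: "\<forall>i<1. x $$ i = 0" using assms small_iff by blast
  show "fps_to_fls (fls_regpart x) = x"
  proof (cases "x = 0")
    case False
    have "0 \<le> fls_subdegree x" using h by (intro fls_subdegree_geI[OF False]) auto
    thus ?thesis by simp
  qed simp
  show "fls_regpart x $ 0 = 0" using h by simp
qed

lemma small1_fps: "f $ 0 = 0 \<Longrightarrow> small 1 (fps_to_fls f)"
  unfolding small_iff by (auto simp: fps_to_fls_nth)

lemma EV:
  fixes A :: "'b::field fps"
  assumes x0: "x $ 0 = 0"
  shows "fls_sums (\<lambda>n. fls_const (A$n) * fps_to_fls x ^ n) (fps_to_fls (A oo x))"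
  unfolding fls_sums_def fls_lim_iff
proof (intro allI)
  fix m :: int
  show "\<exists>N. \<forall>n\<ge>N. \<forall>i<m. (\<Sum>k<n. fls_const (A $ k) * fps_to_fls x ^ k) $$ i = fps_to_fls (A oo x) $$ i"
  proof (intro exI[of _ "nat m"] allI impI)
    fix n i assume n: "nat m \<le> n" and i: "i < m"
    have e: "(\<Sum>k<n. fls_const (A $ k) * fps_to_fls x ^ k) $$ i = (\<Sum>k<n. A $ k * (fps_to_fls (x ^ k)) $$ i)"
      by (simp add: fls_nth_sum fps_to_fls_power)
    show "(\<Sum>k<n. fls_const (A $ k) * fps_to_fls x ^ k) $$ i = fps_to_fls (A oo x) $$ i"
    proof (cases "i < 0")
      case True thus ?thesis unfolding e by (simp add: fps_to_fls_nth)
    next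
      case False
      then obtain j where j: "i = int j" by (metis nonneg_int_cases not_less)
      have jn: "j < n" using j i n by linarith
      have "(\<Sum>k<n. A $ k * (fps_to_fls (x ^ k)) $$ i) = (\<Sum>k<n. A $ k * (x ^ k) $ j)"
        by (simp add: j fps_to_fls_nth)
      also have "\<dots> = (\<Sum>k\<in>{0..j}. A $ k * (x ^ k) $ j)"
        using jn startsby_zero_power_prefix[OF x0]
        by (intro sum.mono_neutral_right) auto
      also have "\<dots> = (A oo x) $ j" by (simp add: fps_compose_nth)
      finally show ?thesis unfolding e by (simp add: j fps_to_fls_nth)
    qed
  qed
qed



lemma sum_delta_mult:
  fixes f :: "nat \<Rightarrow> 'b::semiring_1"
  assumes "finite S"
  shows "(\<Sum>k\<in>S. f k * (if j = k then 1 else 0)) = (if j \<in> S then f j else 0)"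
proof -
  have "(\<Sum>k\<in>S. f k * (if j = k then 1 else 0)) = (\<Sum>k\<in>S. if j = k then f j else 0)"
    by (intro sum.cong) auto
  thus ?thesis using assms by simp
qed

lemma mult_dep:
  assumes "\<forall>j\<le>n. f$j = f'$j" "\<forall>j\<le>n. g$j = g'$j"
  shows "(f*g)$n = (f'*g')$n"
  using assms by (auto simp: fps_mult_nth intro!: sum.cong)

lemma pow_dep:
  assumes "\<forall>j\<le>n. f$j = g$j"
  shows "\<forall>k\<le>n. (f^i)$k = (g^i)$k"
proof (induction i)
  case (Suc i)
  show ?case
  proof (intro allI impI)
    fix k assume k: "k \<le> n"
    have "(f * f^i)$k = (g * g^i)$k"
      by (rule mult_dep) (use k assms Suc in auto)
    thus "(f^Suc i)$k = (g^Suc i)$k" by simp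
  qed
qed simp

lemma comp_dep:
  assumes "\<forall>j\<le>n. a$j = a'$j" "\<forall>j\<le>n. b$j = b'$j"
  shows "(a oo b)$n = (a' oo b')$n"
  using assms pow_dep[OF assms(2)] by (auto simp: fps_compose_nth intro!: sum.cong)

lemma X_pow_comp_nth:
  fixes B :: "'b::idom fps"
  assumes "0 < q"
  shows "(B oo fps_X ^ q) $ k = (if q dvd k then B $ (k div q) else 0)"
proof -
  have "(B oo fps_X ^ q) $ k = (\<Sum>i\<in>{0..k}. B $ i * (if k = q * i then 1 else 0))"
    by (simp add: fps_compose_nth power_mult[symmetric] mult.commute)
  also have "\<dots> = (if q dvd k then B $ (k div q) else 0)"
  proof (cases "q dvd k")
    case True
    then obtain i where i: "k = q * i" by blast
    have ik: "i \<in> {0..k}" using assms i by (auto simp: Suc_le_eq)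
    have "(\<Sum>i'\<in>{0..k}. B $ i' * (if k = q * i' then 1 else 0)) = B $ i"
      by (subst sum.remove[OF _ ik]) (use assms i in \<open>auto intro!: sum.neutral\<close>)
    thus ?thesis using True i assms by simp
  next
    case False thus ?thesis by (auto intro!: sum.neutral)
  qed
  finally show ?thesis .
qed

definition frobc :: "'b::{field,finite} fps \<Rightarrow> 'b fps" where
  "frobc G = Abs_fps (\<lambda>n. (G$n) ^ CHAR('b))"

lemma fps_frob:
  fixes G :: "'b::{field,finite} fps"
  shows "G ^ CHAR('b) = frobc G oo fps_X ^ CHAR('b)"
proof (rule fps_ext)
  fix k
  define p where "p = CHAR('b)"
  have pp: "prime p" unfolding p_def by (rule prime_char)
  hence p0: "0 < p" by (simp add: prime_gt_0_nat)
  define T where "T = (\<Sum>i\<in>{0..k}. fps_const (G$i) * fps_X ^ i)"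
  have TG: "\<forall>j\<le>k. T$j = G$j"
    unfolding T_def by (auto simp: fps_sum_nth sum_delta_mult)
  have "(G ^ p) $ k = (T ^ p) $ k" using TG
    by (metis (no_types, lifting) order_refl pow_dep)
  also have "T ^ p = (\<Sum>i\<in>{0..k}. (fps_const (G$i) * fps_X ^ i) ^ p)"
    unfolding T_def p_def by (rule freshmans_dream_sum) (auto simp: prime_char)
  also have "\<dots> = (\<Sum>i\<in>{0..k}. fps_const ((G$i)^p) * fps_X ^ (p * i))"
    by (simp add: power_mult_distrib fps_const_power power_mult[symmetric] mult.commute)
  also have "(\<Sum>i\<in>{0..k}. fps_const ((G$i)^p) * fps_X ^ (p * i)) $ k
      = (\<Sum>i\<in>{0..k}. (G$i)^p * (if k = p * i then 1 else 0))"
    by (simp add: fps_sum_nth)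
  also have "\<dots> = (frobc G oo fps_X ^ p) $ k"
    by (simp add: fps_compose_nth power_mult[symmetric] mult.commute frobc_def p_def)
  finally show "(G ^ CHAR('b)) $ k = (frobc G oo fps_X ^ CHAR('b)) $ k" unfolding p_def .
qed

lemma pow1X_nth: "((1 + fps_X :: 'b::comm_ring_1 fps) ^ n) $ k = of_nat (n choose k)"
proof -
  have "(1 + fps_X :: 'b fps) ^ n = (fps_X + 1) ^ n" by (simp add: add.commute)
  also have "\<dots> = (\<Sum>i\<le>n. of_nat (n choose i) * fps_X ^ i * 1 ^ (n - i))"
    by (rule binomial_ring)
  finally show ?thesis
    by (auto simp: fps_sum_nth fps_of_nat[symmetric] binomial_eq_0 sum_delta_mult)
qed



lemma mod_X_pow_mult:
  fixes F G :: "'b::comm_ring_1 fps"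
  assumes "\<forall>j<N. G$j = (1::'b fps)$j" "n < N"
  shows "(F*G)$n = F$n"
proof -
  have "(F*G)$n = (F*1)$n" by (rule mult_dep) (use assms in auto)
  thus ?thesis by simp
qed

lemma one_plus_X_pow_char:
  "(1 + fps_X :: 'b::{field,finite} fps) ^ (CHAR('b) ^ k) = 1 + fps_X ^ (CHAR('b) ^ k)"
proof -
  have "prime CHAR('b fps)" by (simp add: prime_char)
  from freshmans_dream'[OF this refl, where x=1 and y=fps_X and n=k] show ?thesis by simp
qed

lemma pow_comp_Xq:
  fixes B :: "'b::idom fps"
  assumes "0 < q"
  shows "B ^ n oo fps_X ^ q = (B oo fps_X ^ q) ^ n"
  using assms by (auto simp: fps_compose_power)

lemma one_plus_X_pow_char_mult:
  "(1 + fps_X :: 'b::{field,finite} fps) ^ (CHAR('b) ^ k * m) = (1 + fps_X) ^ m oo fps_X ^ (CHAR('b) ^ k)"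
proof -
  have p0: "CHAR('b) ^ k > 0" using prime_char[where 'a='b] prime_gt_0_nat by auto
  have "(1 + fps_X :: 'b fps) ^ (CHAR('b) ^ k * m) = (1 + fps_X ^ (CHAR('b) ^ k)) ^ m"
    by (simp add: power_mult one_plus_X_pow_char)
  also have "\<dots> = (1 + fps_X) ^ m oo fps_X ^ (CHAR('b) ^ k)"
    using p0 by (simp add: pow_comp_Xq fps_compose_add_distrib fps_X_power_compose)
  finally show ?thesis .
qed

lemma comp_Xq_low:
  fixes B :: "'b::idom fps"
  assumes "B$0 = 1" "0 < q"
  shows "\<forall>j<q. (B oo fps_X ^ q)$j = (1::'b fps)$j"
  using assms by (auto simp: X_pow_comp_nth dvd_imp_le)

lemma pow1X_mod:
  fixes Y :: nat
  assumes "n < CHAR('b) ^ k"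
  shows "((1 + fps_X :: 'b::{field,finite} fps) ^ Y) $ n = ((1 + fps_X :: 'b fps) ^ (Y mod CHAR('b) ^ k)) $ n"
proof -
  define q where "q = CHAR('b) ^ k"
  have q0: "0 < q" unfolding q_def using prime_char[where 'a='b] prime_gt_0_nat by auto
  have "(1 + fps_X :: 'b fps) ^ Y = (1 + fps_X) ^ (Y mod q + q * (Y div q))" by simp
  also have "\<dots> = (1 + fps_X) ^ (Y mod q) * (1 + fps_X) ^ (q * (Y div q))" by (rule power_add)
  also have "(1 + fps_X :: 'b fps) ^ (q * (Y div q)) = ((1 + fps_X) ^ (Y div q) oo fps_X ^ q)"
    unfolding q_def by (rule one_plus_X_pow_char_mult)
  finally have eq: "(1 + fps_X :: 'b fps) ^ Y = (1 + fps_X) ^ (Y mod q) * ((1 + fps_X) ^ (Y div q) oo fps_X ^ q)" .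
  have "\<forall>j<q. ((1 + fps_X :: 'b fps) ^ (Y div q) oo fps_X ^ q)$j = (1::'b fps)$j"
    by (rule comp_Xq_low[OF _ q0]) (simp add: pow1X_nth)
  from mod_X_pow_mult[OF this assms[folded q_def]] show ?thesis unfolding eq q_def .
qed

lemma pow1X_cong:
  assumes "Y mod CHAR('b) ^ k = Y' mod CHAR('b) ^ k" "n < CHAR('b) ^ k"
  shows "((1 + fps_X :: 'b::{field,finite} fps) ^ Y) $ n = ((1 + fps_X :: 'b fps) ^ Y') $ n"
  using pow1X_mod[OF assms(2), of Y] pow1X_mod[OF assms(2), of Y'] assms(1) by simp

lemma of_nat_mod_char: "(of_nat (m mod CHAR('b)) :: 'b::semiring_1) = of_nat m"
proof -
  have "(of_nat m :: 'b) = of_nat (m mod CHAR('b) + CHAR('b) * (m div CHAR('b)))" by simp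
  also have "\<dots> = of_nat (m mod CHAR('b))" by (simp only: of_nat_add of_nat_mult of_nat_CHAR) simp
  finally show ?thesis by simp
qed

lemma pow1X_unique0:
  fixes Y :: nat
  assumes "Y < CHAR('b) ^ k" "\<forall>n<CHAR('b) ^ k. ((1 + fps_X :: 'b::{field,finite} fps) ^ Y) $ n = (1::'b fps) $ n"
  shows "Y = 0"
  using assms
proof (induction k arbitrary: Y)
  case 0 thus ?case by simp
next
  case (Suc k)
  define p where "p = CHAR('b)"
  have pp: "prime p" unfolding p_def by (rule prime_char)
  hence p2: "2 \<le> p" by (simp add: prime_ge_2_nat)
  define Y0 where "Y0 = Y mod p"
  define Y1 where "Y1 = Y div p"
  have YY: "Y = Y0 + p * Y1" unfolding Y0_def Y1_def by simp
  have Y1: "Y1 < p ^ k" using Suc.prems(1) unfolding Y1_def p_def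
    by (simp add: less_mult_imp_div_less mult.commute)
  have fact: "(1 + fps_X :: 'b fps) ^ Y = (1 + fps_X) ^ Y0 * ((1 + fps_X) ^ Y1 oo fps_X ^ p)"
    using one_plus_X_pow_char_mult[where 'b='b, of 1 Y1] unfolding YY p_def by (simp add: power_add)
  have low: "\<forall>j<p. ((1 + fps_X :: 'b fps) ^ Y1 oo fps_X ^ p)$j = (1::'b fps)$j"
    by (rule comp_Xq_low) (use p2 in \<open>auto simp: pow1X_nth\<close>)
  have "((1 + fps_X :: 'b fps) ^ Y) $ 1 = ((1 + fps_X :: 'b fps) ^ Y0) $ 1"
    unfolding fact by (rule mod_X_pow_mult[OF low]) (use p2 in auto)
  moreover have "1 < p ^ Suc k" using p2 by (metis Suc_1 Suc_le_lessD less_le_trans one_less_power zero_less_Suc)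
  moreover have "((1 + fps_X :: 'b fps) ^ Y) $ 1 = (1::'b fps) $ 1" using Suc.prems(2) calculation(2) unfolding p_def by blast
  ultimately have "(of_nat Y0 :: 'b) = 0" by (simp add: pow1X_nth)
  hence "p dvd Y0" unfolding p_def by (simp add: of_nat_eq_0_iff_char_dvd)
  hence Y00: "Y0 = 0" using \<open>p dvd Y0\<close> unfolding Y0_def by (simp add: dvd_eq_mod_eq_0)
  have "\<forall>n<p ^ k. ((1 + fps_X :: 'b fps) ^ Y1) $ n = (1::'b fps) $ n"
  proof (intro allI impI)
    fix n assume n: "n < p ^ k"
    have "p * n < p ^ Suc k" using n p2 by simp
    hence "((1 + fps_X :: 'b fps) ^ Y) $ (p * n) = (1::'b fps) $ (p * n)" using Suc.prems(2) unfolding p_def by blast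
    moreover have "((1 + fps_X :: 'b fps) ^ Y) = ((1 + fps_X) ^ Y1 oo fps_X ^ p)" using fact Y00 by simp
    ultimately show "((1 + fps_X :: 'b fps) ^ Y1) $ n = (1::'b fps) $ n"
      using p2 by (auto simp: X_pow_comp_nth)
  qed
  hence "Y1 = 0" using Suc.IH[OF Y1[unfolded p_def]] unfolding p_def by blast
  thus ?case using YY Y00 by simp
qed

lemma pow1X_unique:
  fixes Y Y' :: nat
  assumes "Y < CHAR('b) ^ k" "Y' < CHAR('b) ^ k"
    "\<forall>n<CHAR('b) ^ k. ((1 + fps_X :: 'b::{field,finite} fps) ^ Y) $ n = ((1 + fps_X :: 'b fps) ^ Y') $ n"
  shows "Y = Y'"
proof -
  have main: "Y = Y'" if le: "Y' \<le> Y" and a: "Y < CHAR('b) ^ k"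
     and h: "\<forall>n<CHAR('b) ^ k. ((1 + fps_X :: 'b fps) ^ Y) $ n = ((1 + fps_X :: 'b fps) ^ Y') $ n" for Y Y'
  proof -
    define I where "I = inverse ((1 + fps_X :: 'b fps) ^ Y')"
    have I1: "I * (1 + fps_X) ^ Y' = 1" unfolding I_def by (simp add: inverse_mult_eq_1)
    have "I * (1 + fps_X) ^ Y = I * ((1 + fps_X) ^ Y' * (1 + fps_X) ^ (Y - Y'))"
      using le by (simp flip: power_add)
    also have "\<dots> = (I * (1 + fps_X) ^ Y') * (1 + fps_X) ^ (Y - Y')" by (simp only: mult.assoc)
    finally have eq: "(1 + fps_X :: 'b fps) ^ (Y - Y') = I * (1 + fps_X) ^ Y" using I1 by simp
    have "\<forall>n<CHAR('b) ^ k. ((1 + fps_X :: 'b fps) ^ (Y - Y')) $ n = (1::'b fps) $ n"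
    proof (intro allI impI)
      fix n assume n: "n < CHAR('b) ^ k"
      have "(I * (1 + fps_X) ^ Y) $ n = (I * (1 + fps_X) ^ Y') $ n"
        by (rule mult_dep) (use h n in auto)
      thus "((1 + fps_X :: 'b fps) ^ (Y - Y')) $ n = (1::'b fps) $ n" unfolding eq I1 .
    qed
    hence "Y - Y' = 0" by (intro pow1X_unique0) (use a in auto)
    thus ?thesis using le by simp
  qed
  show ?thesis
  proof (cases "Y' \<le> Y")
    case True thus ?thesis using main assms by blast
  next
    case False thus ?thesis using main[of Y Y'] assms by (metis linear)
  qed
qed



definition Apow :: "(nat \<Rightarrow> int) \<Rightarrow> 'b::{field,finite} fps" where
  "Apow y = Abs_fps (\<lambda>n. of_int (Zp_binom CHAR('b) y n 1))"

definition hom_fps :: "'b::field fps \<Rightarrow> bool" where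
  "hom_fps A \<longleftrightarrow> (\<forall>x z. x$0 = 0 \<longrightarrow> z$0 = 0 \<longrightarrow> A oo (x + z + x*z) = (A oo x) * (A oo z))"

lemma p_ge2: "2 \<le> CHAR('b::{field,finite})"
  using prime_char[where 'a='b] prime_ge_2_nat by blast

lemma n_less_p_pow: "n < CHAR('b::{field,finite}) ^ Suc n"
proof -
  have "n < 2 ^ n" by (rule less_exp)
  also have "(2::nat) ^ n \<le> CHAR('b) ^ n" using p_ge2[where 'b='b] by (rule power_mono) simp
  also have "\<dots> \<le> CHAR('b) ^ Suc n" using p_ge2[where 'b='b] by simp
  finally show ?thesis .
qed

lemma zp_nonneg: "y \<in> Zp p \<Longrightarrow> 0 \<le> y k" and zp_less: "y \<in> Zp p \<Longrightarrow> y k < int p ^ k"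
  unfolding Zp_def mem_Collect_eq by blast+

lemma zp_compat: "y \<in> Zp p \<Longrightarrow> y (Suc k) mod int p ^ k = y k"
proof -
  assume "y \<in> Zp p"
  hence "y k = y (Suc k) mod int p ^ k" unfolding Zp_def by blast
  thus ?thesis by (rule sym)
qed

lemma zp_mod:
  assumes "y \<in> Zp p" "j \<le> k"
  shows "y k mod int p ^ j = y j"
  using assms(2)
proof (induction k)
  case 0 thus ?case using zp_nonneg[OF assms(1), of 0] zp_less[OF assms(1), of 0] by simp
next
  case (Suc k)
  show ?case
  proof (cases "j = Suc k")
    case True thus ?thesis using zp_nonneg[OF assms(1), of j] zp_less[OF assms(1), of j] by simp
  next
    case False
    hence jk: "j \<le> k" using Suc.prems by simp
    have "y (Suc k) mod int p ^ j = (y (Suc k) mod int p ^ k) mod int p ^ j"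
      using jk by (simp add: le_imp_power_dvd mod_mod_cancel)
    also have "y (Suc k) mod int p ^ k = y k" using zp_compat[OF assms(1)] .
    finally show ?thesis using Suc.IH jk by simp
  qed
qed

lemma nat_mod_pow: "0 \<le> a \<Longrightarrow> nat (a mod int p ^ j) = nat a mod p ^ j"
  by (simp add: nat_mod_distrib nat_power_eq)

lemma Apow_nth:
  fixes y :: "nat \<Rightarrow> int"
  assumes y: "y \<in> Zp CHAR('b)" and n: "n < CHAR('b::{field,finite}) ^ k"
  shows "(Apow y :: 'b fps) $ n = ((1 + fps_X) ^ nat (y k)) $ n"
proof -
  define p where "p = CHAR('b)"
  have "(Apow y :: 'b fps) $ n = of_int (int ((nat (y (1 + n)) choose n) mod p))"
    by (simp add: Apow_def Zp_binom_def p_def)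
  also have "\<dots> = (of_nat ((nat (y (1 + n)) choose n) mod p) :: 'b)" by simp
  also have "\<dots> = of_nat (nat (y (1 + n)) choose n)" unfolding p_def by (rule of_nat_mod_char)
  also have "\<dots> = ((1 + fps_X :: 'b fps) ^ nat (y (1 + n))) $ n" by (simp add: pow1X_nth)
  also have "\<dots> = ((1 + fps_X :: 'b fps) ^ nat (y k)) $ n"
  proof (rule pow1X_cong[where k="min k (1+n)"])
    have "nat (y (1 + n)) mod p ^ min k (1 + n) = nat (y (1 + n) mod int p ^ min k (1 + n))"
      using zp_nonneg[OF y] by (simp add: nat_mod_pow p_def)
    also have "\<dots> = nat (y (min k (1+n)))" using zp_mod[OF y[folded p_def]] by simp
    also have "\<dots> = nat (y k mod int p ^ min k (1 + n))" using zp_mod[OF y[folded p_def]] by simp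
    also have "\<dots> = nat (y k) mod p ^ min k (1 + n)"
      using zp_nonneg[OF y] by (simp add: nat_mod_pow p_def)
    finally show "nat (y (1 + n)) mod CHAR('b) ^ min k (1 + n) = nat (y k) mod CHAR('b) ^ min k (1 + n)"
      unfolding p_def .
    show "n < CHAR('b) ^ min k (1 + n)" using n n_less_p_pow[where 'b='b, of n]
      by (cases "k \<le> 1 + n") (auto simp: min_def)
  qed
  finally show ?thesis .
qed

lemma Apow_0: "(Apow y :: 'b::{field,finite} fps) $ 0 = 1"
  using p_ge2[where 'b='b] by (simp add: Apow_def Zp_binom_def)

lemma compose_1X: "x$0 = 0 \<Longrightarrow> (1 + fps_X :: 'b::idom fps) oo x = 1 + x"
  by (simp add: fps_compose_add_distrib)

lemma pow1X_compose: "x$0 = 0 \<Longrightarrow> (1 + fps_X :: 'b::idom fps) ^ Y oo x = (1 + x) ^ Y"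
  by (simp add: fps_compose_power[symmetric] compose_1X)

lemma hom_pow1X: "hom_fps ((1 + fps_X :: 'b::field fps) ^ Y)"
  unfolding hom_fps_def
proof (intro allI impI)
  fix x z :: "'b fps" assume x: "x$0 = 0" and z: "z$0 = 0"
  have "(x + z + x*z) $ 0 = 0" using x z by simp
  hence "(1 + fps_X) ^ Y oo (x + z + x*z) = (1 + (x + z + x*z)) ^ Y" by (rule pow1X_compose)
  also have "\<dots> = ((1 + x) * (1 + z)) ^ Y" by (simp add: algebra_simps)
  also have "\<dots> = ((1 + fps_X) ^ Y oo x) * ((1 + fps_X) ^ Y oo z)"
    using x z by (simp add: pow1X_compose power_mult_distrib)
  finally show "(1 + fps_X) ^ Y oo (x + z + x*z) = ((1 + fps_X) ^ Y oo x) * ((1 + fps_X) ^ Y oo z)" .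
qed

lemma Apow_approx:
  assumes y: "y \<in> Zp CHAR('b)"
  shows "\<forall>j\<le>n. (Apow y :: 'b::{field,finite} fps) $ j = ((1 + fps_X) ^ nat (y (Suc n))) $ j"
proof (intro allI impI)
  fix j assume "j \<le> n"
  hence "j < CHAR('b) ^ Suc n" using n_less_p_pow[where 'b='b, of n] by linarith
  thus "(Apow y :: 'b fps) $ j = ((1 + fps_X) ^ nat (y (Suc n))) $ j" by (rule Apow_nth[OF y])
qed

lemma comp_dep_all:
  assumes "\<forall>j\<le>n. a$j = a'$j" "\<forall>j\<le>n. b$j = b'$j"
  shows "\<forall>j\<le>n. (a oo b)$j = (a' oo b')$j"
proof (intro allI impI)
  fix j assume "j \<le> n"
  thus "(a oo b)$j = (a' oo b')$j" by (intro comp_dep) (use assms in auto)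
qed

lemma hom_Apow:
  assumes y: "y \<in> Zp CHAR('b)"
  shows "hom_fps (Apow y :: 'b::{field,finite} fps)"
  unfolding hom_fps_def
proof (intro allI impI fps_ext)
  fix x z :: "'b fps" and n assume x: "x$0 = 0" and z: "z$0 = 0"
  define Q where "Q = (1 + fps_X :: 'b fps) ^ nat (y (Suc n))"
  have AQ: "\<forall>j\<le>n. (Apow y :: 'b fps) $ j = Q $ j" unfolding Q_def by (rule Apow_approx[OF y])
  have "(Apow y oo (x + z + x*z)) $ n = (Q oo (x + z + x*z)) $ n" by (rule comp_dep) (use AQ in auto)
  also have "Q oo (x + z + x*z) = (Q oo x) * (Q oo z)"
    using hom_pow1X[of "nat (y (Suc n))"] x z unfolding Q_def hom_fps_def by blast
  also have "((Q oo x) * (Q oo z)) $ n = ((Apow y oo x) * (Apow y oo z)) $ n"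
    by (rule mult_dep) (use comp_dep_all[OF AQ, of x x] comp_dep_all[OF AQ, of z z] in auto)
  finally show "(Apow y oo (x + z + x*z)) $ n = ((Apow y oo x) * (Apow y oo z)) $ n" .
qed

lemma Zp_mult_Zp:
  assumes "y \<in> Zp p" "z \<in> Zp p" "0 < p"
  shows "Zp_mult p y z \<in> Zp p"
  unfolding Zp_def Zp_mult_def
proof (intro CollectI allI conjI)
  fix k
  show "0 \<le> y k * z k mod int p ^ k" using assms by simp
  show "y k * z k mod int p ^ k < int p ^ k" using assms by simp
  have "y (Suc k) * z (Suc k) mod int p ^ Suc k mod int p ^ k = y (Suc k) * z (Suc k) mod int p ^ k"
    by (simp add: le_imp_power_dvd mod_mod_cancel)
  also have "\<dots> = (y (Suc k) mod int p ^ k) * (z (Suc k) mod int p ^ k) mod int p ^ k"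
    by (simp add: mod_mult_eq)
  also have "\<dots> = y k * z k mod int p ^ k" using zp_compat[OF assms(1)] zp_compat[OF assms(2)] by simp
  finally show "y k * z k mod int p ^ k = y (Suc k) * z (Suc k) mod int p ^ Suc k mod int p ^ k" by simp
qed

lemma Apow_mult:
  assumes y: "y \<in> Zp CHAR('b)" and z: "z \<in> Zp CHAR('b)"
  shows "(Apow (Zp_mult CHAR('b) y z) :: 'b::{field,finite} fps) = Apow y oo (Apow z - 1)"
proof (rule fps_ext)
  fix n
  define k where "k = Suc n"
  define p where "p = CHAR('b)"
  have p0: "0 < p" using p_ge2[where 'b='b] unfolding p_def by simp
  have yz: "Zp_mult p y z \<in> Zp p" using Zp_mult_Zp[OF y[folded p_def] z[folded p_def] p0] .
  define Qy where "Qy = (1 + fps_X :: 'b fps) ^ nat (y k)"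
  define Qz where "Qz = (1 + fps_X :: 'b fps) ^ nat (z k)"
  have "(Apow (Zp_mult p y z) :: 'b fps) $ n = ((1 + fps_X) ^ nat (Zp_mult p y z k)) $ n"
    using Apow_approx[OF yz[unfolded p_def], of n] unfolding k_def p_def by simp
  also have "\<dots> = ((1 + fps_X :: 'b fps) ^ (nat (y k) * nat (z k))) $ n"
  proof (rule pow1X_cong[where k=k])
    show "n < CHAR('b) ^ k" unfolding k_def by (rule n_less_p_pow)
    have "nat (Zp_mult p y z k) = nat (y k * z k mod int p ^ k)" by (simp add: Zp_mult_def)
    also have "\<dots> = nat (y k * z k) mod p ^ k"
      using zp_nonneg[OF y] zp_nonneg[OF z] by (simp add: nat_mod_pow p_def)
    finally show "nat (Zp_mult p y z k) mod CHAR('b) ^ k = nat (y k) * nat (z k) mod CHAR('b) ^ k"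
      using zp_nonneg[OF y] zp_nonneg[OF z] by (simp add: p_def nat_mult_distrib)
  qed
  also have "(1 + fps_X :: 'b fps) ^ (nat (y k) * nat (z k)) = Qy oo (Qz - 1)"
  proof -
    have "(Qz - 1) $ 0 = 0" unfolding Qz_def by (simp add: pow1X_nth)
    hence "Qy oo (Qz - 1) = (1 + (Qz - 1)) ^ nat (y k)" unfolding Qy_def by (rule pow1X_compose)
    also have "\<dots> = Qz ^ nat (y k)" by simp
    also have "\<dots> = (1 + fps_X :: 'b fps) ^ (nat (y k) * nat (z k))"
      unfolding Qz_def by (simp only: power_mult[symmetric] mult.commute)
    finally show ?thesis by (rule sym)
  qed
  also have "(Qy oo (Qz - 1)) $ n = (Apow y oo (Apow z - 1)) $ n"
    by (rule comp_dep) (use Apow_approx[OF y, of n] Apow_approx[OF z, of n] in \<open>auto simp: Qy_def Qz_def k_def\<close>)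
  finally show "(Apow (Zp_mult CHAR('b) y z) :: 'b fps) $ n = (Apow y oo (Apow z - 1)) $ n"
    unfolding p_def .
qed

lemma Apow_one: "(Apow (Zp_one CHAR('b)) :: 'b::{field,finite} fps) = 1 + fps_X"
proof (rule fps_ext)
  fix n
  have "(1::nat) < CHAR('b) ^ (1 + n)"
    using p_ge2[where 'b='b] by (intro one_less_power) auto
  hence h: "(1::int) < int CHAR('b) ^ (1 + n)" by (metis of_nat_1 of_nat_less_iff of_nat_power)
  have "(1::int) mod int CHAR('b) ^ (1 + n) = 1"
    using h by simp
  thus "(Apow (Zp_one CHAR('b)) :: 'b fps) $ n = (1 + fps_X) $ n"
    using p_ge2[where 'b='b]
    by (cases n) (auto simp: Apow_def Zp_binom_def Zp_one_def binomial_eq_0)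
qed

lemma Apow_inj:
  assumes y: "y \<in> Zp CHAR('b)" and y': "y' \<in> Zp CHAR('b)"
    and eq: "(Apow y :: 'b::{field,finite} fps) = Apow y'"
  shows "y = y'"
proof
  fix k
  have "nat (y k) = nat (y' k)"
  proof (rule pow1X_unique[where 'b='b and k=k])
    show "nat (y k) < CHAR('b) ^ k" using zp_less[OF y, of k] zp_nonneg[OF y, of k]
      by (simp add: nat_less_iff)
    show "nat (y' k) < CHAR('b) ^ k" using zp_less[OF y', of k] zp_nonneg[OF y', of k]
      by (simp add: nat_less_iff)
    show "\<forall>n<CHAR('b) ^ k. ((1 + fps_X :: 'b fps) ^ nat (y k)) $ n = ((1 + fps_X :: 'b fps) ^ nat (y' k)) $ n"
    proof (intro allI impI)
      fix n assume n: "n < CHAR('b) ^ k"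
      show "((1 + fps_X :: 'b fps) ^ nat (y k)) $ n = ((1 + fps_X :: 'b fps) ^ nat (y' k)) $ n"
        using Apow_nth[OF y n] Apow_nth[OF y' n] eq by simp
    qed
  qed
  thus "y k = y' k" using zp_nonneg[OF y, of k] zp_nonneg[OF y', of k] by simp
qed



lemma small_add: "small m x \<Longrightarrow> small m z \<Longrightarrow> small m (x + z)"
  by (simp add: small_iff)
lemma small_diff: "small m x \<Longrightarrow> small m z \<Longrightarrow> small m (x - z)"
  by (simp add: small_iff)
lemma small_mono: "m' \<le> m \<Longrightarrow> small m x \<Longrightarrow> small m' x"
  by (simp add: small_iff)
lemma small_0 [simp]: "small m 0"
  by (simp add: small_def)
lemma small_mult:
  fixes x z :: "'b::field fls"
  shows "small a x \<Longrightarrow> small b z \<Longrightarrow> small (a + b) (x * z)"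
  unfolding small_def by (cases "x = 0 \<or> z = 0") auto
lemma small_pow:
  fixes x :: "'b::field fls"
  shows "small a x \<Longrightarrow> small (int n * a) (x ^ n)"
proof (induction n)
  case 0 thus ?case by (simp add: small_def)
next
  case (Suc n)
  have "small (a + int n * a) (x * x ^ n)" by (rule small_mult[OF Suc.prems Suc.IH[OF Suc.prems]])
  thus ?case by (simp add: algebra_simps)
qed
lemma small_const: "small 0 (fls_const c)"
  by (simp add: small_iff)

lemma one_units_iff: "u \<in> one_units \<longleftrightarrow> small 1 (u - 1)"
  by (simp add: one_units_def)

lemma U_subdeg:
  fixes u :: "'b::field fls"
  assumes "u \<in> one_units" shows "u \<noteq> 0" "fls_subdegree u = 0" "small 0 u"
proof -
  have h: "\<forall>i<1. (u - 1) $$ i = 0" using assms by (simp add: one_units_def small_iff)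
  hence u0: "u $$ 0 = 1" by (metis fls_minus_nth fls_one_nth eq_iff_diff_eq_0 zero_less_one)
  thus "u \<noteq> 0" by auto
  have neg: "\<forall>i<0. u $$ i = 0" using h by auto
  show "fls_subdegree u = 0"
    by (intro antisym fls_subdegree_leI fls_subdegree_geI) (use u0 neg in auto)
  show "small 0 u" using neg by (simp add: small_iff)
qed

definition xr :: "'b::field fls \<Rightarrow> 'b fps" where "xr u = fls_regpart (u - 1)"

definition Ev :: "'b::field fps \<Rightarrow> 'b fls \<Rightarrow> 'b fls" where
  "Ev A u = fps_to_fls (A oo xr u)"

lemma xr_U:
  assumes "u \<in> one_units"
  shows "fps_to_fls (xr u) = u - 1" "xr u $ 0 = 0" "u = 1 + fps_to_fls (xr u)"
  using regpart_small1[of "u - 1"] assms by (auto simp: xr_def one_units_def)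

lemma fps_U:
  fixes G :: "'b::field fps"
  assumes "G $ 0 = 1"
  shows "fps_to_fls G \<in> one_units" "xr (fps_to_fls G) = G - 1"
proof -
  have "fps_to_fls G - 1 = fps_to_fls (G - 1)" by simp
  moreover have "(G - 1) $ 0 = 0" using assms by simp
  ultimately show "fps_to_fls G \<in> one_units" "xr (fps_to_fls G) = G - 1"
    using small1_fps[of "G - 1"] by (auto simp: one_units_def xr_def simp del: fps_to_fls_minus)
qed

lemma x_U:
  fixes x :: "'b::field fps"
  assumes "x $ 0 = 0"
  shows "1 + fps_to_fls x \<in> one_units" "xr (1 + fps_to_fls x) = x"
  using fps_U[of "1 + x"] assms by simp_all

lemma Ev_U: "A $ 0 = 1 \<Longrightarrow> Ev A u \<in> one_units"
  unfolding Ev_def by (rule fps_U) simp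

lemma U_mult:
  assumes "u \<in> one_units" "v \<in> one_units"
  shows "u * v \<in> one_units" "xr (u * v) = xr u + xr v + xr u * xr v"
proof -
  have "fps_to_fls (xr u + xr v + xr u * xr v) = fps_to_fls (xr u) + fps_to_fls (xr v) + fps_to_fls (xr u) * fps_to_fls (xr v)"
    by (simp add: fls_times_fps_to_fls)
  also have "\<dots> = (u - 1) + (v - 1) + (u - 1) * (v - 1)" 
    unfolding xr_U(1)[OF assms(1)] xr_U(1)[OF assms(2)] ..
  finally have "u * v = 1 + fps_to_fls (xr u + xr v + xr u * xr v)"
    by (simp add: algebra_simps)
  moreover have "(xr u + xr v + xr u * xr v) $ 0 = 0" using xr_U[OF assms(1)] xr_U[OF assms(2)] by simp
  ultimately show "u * v \<in> one_units" "xr (u * v) = xr u + xr v + xr u * xr v"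
    using x_U by (metis (no_types))+
qed

lemma Ev_mult:
  assumes "hom_fps A" "u \<in> one_units" "v \<in> one_units"
  shows "Ev A (u * v) = Ev A u * Ev A v"
proof -
  have "A oo (xr u + xr v + xr u * xr v) = (A oo xr u) * (A oo xr v)"
    using assms(1) xr_U(2)[OF assms(2)] xr_U(2)[OF assms(3)] unfolding hom_fps_def by blast
  thus ?thesis unfolding Ev_def U_mult(2)[OF assms(2,3)] by (simp add: fls_times_fps_to_fls)
qed

lemma Ev_comp:
  fixes A B :: "'b::field fps"
  assumes "B $ 0 = 1" "u \<in> one_units"
  shows "Ev A (Ev B u) = Ev (A oo (B - 1)) u"
proof -
  have "xr (Ev B u) = (B oo xr u) - 1" unfolding Ev_def by (rule fps_U(2)) (simp add: assms)
  also have "\<dots> = (B - 1) oo xr u" by (simp add: fps_compose_sub_distrib)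
  finally have "Ev A (Ev B u) = fps_to_fls (A oo ((B - 1) oo xr u))" by (simp add: Ev_def)
  also have "A oo ((B - 1) oo xr u) = (A oo (B - 1)) oo xr u"
    by (rule fps_compose_assoc) (use xr_U(2)[OF assms(2)] assms(1) in auto)
  finally show ?thesis by (simp add: Ev_def)
qed

lemma Ev_id:
  assumes "u \<in> one_units" shows "Ev (1 + fps_X) u = (u :: 'b::field fls)"
proof -
  have "Ev (1 + fps_X) u = fps_to_fls (1 + xr u)"
    unfolding Ev_def using xr_U(2)[OF assms] by (simp add: compose_1X)
  thus ?thesis using xr_U(3)[OF assms] by simp
qed

lemma Ev_sums:
  assumes "u \<in> one_units"
  shows "fls_sums (\<lambda>n. fls_const (A$n) * (u - 1) ^ n) (Ev A u)"
  using EV[OF xr_U(2)[OF assms], of A] xr_U(1)[OF assms] by (simp add: Ev_def)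

lemma Zp_pow_Ev:
  assumes "u \<in> one_units"
  shows "Zp_pow y u = Ev (Apow y) (u :: 'b::{field,finite} fls)"
proof -
  have "(\<lambda>n. of_int (Zp_binom CHAR('b) y n 1) * (u - 1) ^ n) = (\<lambda>n. fls_const ((Apow y :: 'b fps) $ n) * (u - 1) ^ n)"
    by (simp add: fls_of_int Apow_def)
  thus ?thesis unfolding Zp_pow_def using the_sums[OF Ev_sums[OF assms]] by simp
qed



lemma inv_mod_unique:
  fixes a w1 w2 m :: int
  assumes "0 \<le> w1" "w1 < m" "0 \<le> w2" "w2 < m" "(a * w1) mod m = 1 mod m" "(a * w2) mod m = 1 mod m"
  shows "w1 = w2"
proof -
  have "w1 = w1 mod m" using assms by simp
  also have "\<dots> = (w1 * (1 mod m)) mod m" by (simp add: mod_mult_right_eq)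
  also have "\<dots> = (w1 * ((a * w2) mod m)) mod m" using assms(6) by simp
  also have "\<dots> = ((w1 * a) * w2) mod m" by (simp add: mod_mult_right_eq mult.assoc)
  also have "\<dots> = ((a * w1) * w2) mod m" by (simp add: mult.commute)
  also have "\<dots> = (((a * w1) mod m) * w2) mod m" by (rule mod_mult_left_eq[symmetric])
  also have "\<dots> = ((1 mod m) * w2) mod m" using assms(5) by simp
  also have "\<dots> = w2 mod m" by (simp add: mod_mult_left_eq)
  also have "\<dots> = w2" using assms by simp
  finally show ?thesis .
qed

lemma zp_unit_inv:
  assumes y: "y \<in> Zp_units p" and pp: "prime p"
  shows "\<exists>z \<in> Zp_units p. \<forall>k. (y k * z k) mod int p ^ k = 1 mod int p ^ k"
proof -
  have yZ: "y \<in> Zp p" and y1: "y 1 \<noteq> 0" using y by (auto simp: Zp_units_def)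
  have p2: "2 \<le> p" using pp prime_ge_2_nat by blast
  have ppos: "0 < int p ^ k" for k using p2 by simp
  have ex: "\<exists>w. 0 \<le> w \<and> w < int p ^ k \<and> (y k * w) mod int p ^ k = 1 mod int p ^ k" for k
  proof -
    have cop: "coprime (y k) (int p ^ k)"
    proof (cases "k = 0")
      case False
      have "y k mod int p = y 1" using zp_mod[OF yZ, of 1 k] False by simp
      hence "\<not> int p dvd y k" using y1 by (metis dvd_eq_mod_eq_0)
      hence "coprime (int p) (y k)" using pp by (intro prime_imp_coprime) simp_all
      thus ?thesis by (simp add: coprime_commute)
    qed simp
    then obtain u v where uv: "u * y k + v * int p ^ k = 1"
      using bezout_int[of "y k" "int p ^ k"] by auto
    have "(y k * (u mod int p ^ k)) mod int p ^ k = (y k * u) mod int p ^ k"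
      by (simp add: mod_mult_right_eq)
    also have "y k * u = 1 + (- v) * int p ^ k" using uv by (simp add: algebra_simps)
    also have "(1 + (- v) * int p ^ k) mod int p ^ k = 1 mod int p ^ k" by (rule mod_mult_self1)
    finally show ?thesis using ppos[of k] by (intro exI[of _ "u mod int p ^ k"]) simp
  qed
  define z where "z k = (SOME w. 0 \<le> w \<and> w < int p ^ k \<and> (y k * w) mod int p ^ k = 1 mod int p ^ k)" for k
  have zk: "0 \<le> z k \<and> z k < int p ^ k \<and> (y k * z k) mod int p ^ k = 1 mod int p ^ k" for k
    unfolding z_def by (rule someI_ex[OF ex])
  have compat: "z k = z (Suc k) mod int p ^ k" for k
  proof (rule inv_mod_unique[where a="y k" and m="int p ^ k"])
    show "0 \<le> z k" "z k < int p ^ k" "(y k * z k) mod int p ^ k = 1 mod int p ^ k" using zk[of k] by auto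
    show "0 \<le> z (Suc k) mod int p ^ k" "z (Suc k) mod int p ^ k < int p ^ k" using ppos[of k] by auto
    have "(y k * (z (Suc k) mod int p ^ k)) mod int p ^ k = (y k * z (Suc k)) mod int p ^ k"
      by (simp add: mod_mult_right_eq)
    also have "\<dots> = ((y (Suc k) mod int p ^ k) * z (Suc k)) mod int p ^ k"
      using zp_compat[OF yZ, of k] by simp
    also have "\<dots> = (y (Suc k) * z (Suc k)) mod int p ^ k" by (simp add: mod_mult_left_eq)
    also have "\<dots> = ((y (Suc k) * z (Suc k)) mod int p ^ Suc k) mod int p ^ k"
      by (simp add: le_imp_power_dvd mod_mod_cancel)
    also have "\<dots> = (1 mod int p ^ Suc k) mod int p ^ k" using zk[of "Suc k"] by simp
    also have "\<dots> = 1 mod int p ^ k" by (simp add: le_imp_power_dvd mod_mod_cancel)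
    finally show "(y k * (z (Suc k) mod int p ^ k)) mod int p ^ k = 1 mod int p ^ k" .
  qed
  have "z \<in> Zp p" unfolding Zp_def using zk compat by blast
  moreover have "z 1 \<noteq> 0"
  proof
    assume "z 1 = 0"
    hence "(1::int) mod int p = 0" using zk[of 1] by simp
    thus False using p2 by simp
  qed
  ultimately have "z \<in> Zp_units p" by (simp add: Zp_units_def)
  thus ?thesis using zk by blast
qed

definition hmap :: "(nat \<Rightarrow> int) \<Rightarrow> 'b::{field,finite} fls \<Rightarrow> 'b fls" where
  "hmap y = restrict (Zp_pow y) one_units"

lemma hmap_U: "u \<in> one_units \<Longrightarrow> hmap y u = Ev (Apow y) (u :: 'b::{field,finite} fls)"
  by (simp add: hmap_def Zp_pow_Ev)

lemma hmap_in_U: "u \<in> one_units \<Longrightarrow> hmap y (u :: 'b::{field,finite} fls) \<in> one_units"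
  by (simp add: hmap_U Ev_U Apow_0)

lemma hmap_mult:
  assumes "y \<in> Zp CHAR('b)" "u \<in> one_units" "v \<in> one_units"
  shows "hmap y (u * v) = hmap y u * hmap y (v :: 'b::{field,finite} fls)"
  using assms hom_Apow[OF assms(1)] by (simp add: hmap_U U_mult Ev_mult)

lemma hmap_comp:
  assumes "y \<in> Zp CHAR('b)" "z \<in> Zp CHAR('b)" "u \<in> one_units"
  shows "hmap (Zp_mult CHAR('b) y z) u = hmap y (hmap z (u :: 'b::{field,finite} fls))"
proof -
  have e: "Ev (Apow z) u \<in> one_units" by (rule Ev_U) (simp add: Apow_0)
  have "hmap (Zp_mult CHAR('b) y z) u = Ev (Apow y oo (Apow z - 1)) u"
    using assms by (simp add: hmap_U Apow_mult)
  also have "\<dots> = Ev (Apow y) (Ev (Apow z) u)" by (rule Ev_comp[symmetric]) (simp_all add: Apow_0 assms)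
  also have "\<dots> = hmap y (hmap z u)" using assms e by (simp add: hmap_U)
  finally show ?thesis .
qed

lemma hmap_one:
  assumes "u \<in> one_units"
  shows "hmap (Zp_one CHAR('b)) u = (u :: 'b::{field,finite} fls)"
  using assms by (simp add: hmap_U Apow_one Ev_id)

lemma Zp_mult_comm: "Zp_mult p y z = Zp_mult p z y"
  by (simp add: Zp_mult_def mult.commute)

lemma hmap_bij:
  assumes y: "y \<in> Zp_units CHAR('b)"
  shows "bij_betw (hmap y) one_units (one_units :: 'b::{field,finite} fls set)"
proof -
  obtain z where z: "z \<in> Zp_units CHAR('b)" and yz: "\<forall>k. (y k * z k) mod int CHAR('b) ^ k = 1 mod int CHAR('b) ^ k"
    using zp_unit_inv[OF y prime_char] by blast
  have yZ: "y \<in> Zp CHAR('b)" and zZ: "z \<in> Zp CHAR('b)" using y z by (auto simp: Zp_units_def)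
  have m1: "Zp_mult CHAR('b) y z = Zp_one CHAR('b)" using yz by (auto simp: Zp_mult_def Zp_one_def)
  have m2: "Zp_mult CHAR('b) z y = Zp_one CHAR('b)" using m1 Zp_mult_comm by metis
  show ?thesis
  proof (rule bij_betwI[where g="hmap z"])
    show "hmap y \<in> one_units \<rightarrow> one_units" "hmap z \<in> one_units \<rightarrow> one_units"
      using hmap_in_U by blast+
    show "hmap z (hmap y x) = x" if "x \<in> one_units" for x :: "'b fls"
      using hmap_comp[OF zZ yZ that] hmap_one[OF that] m2 by simp
    show "hmap y (hmap z x) = x" if "x \<in> one_units" for x :: "'b fls"
      using hmap_comp[OF yZ zZ that] hmap_one[OF that] m1 by simp
  qed
qed

lemma fls_lim_scale:
  fixes k :: "'b::field fls"
  assumes "fls_lim s L"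
  shows "fls_lim (\<lambda>n. k * s n) (k * L)"
proof (cases "k = 0")
  case True thus ?thesis by (simp add: fls_lim_def)
next
  case False
  show ?thesis unfolding fls_lim_def
  proof
    fix m
    obtain N where N: "\<forall>n\<ge>N. small (m - fls_subdegree k) (s n - L)"
      using assms unfolding fls_lim_def by blast
    have sk: "small (fls_subdegree k) k" by (simp add: small_def)
    have "\<forall>n\<ge>N. small m (k * s n - k * L)"
    proof (intro allI impI)
      fix n assume "N \<le> n"
      hence "small (fls_subdegree k + (m - fls_subdegree k)) (k * (s n - L))"
        using N small_mult[OF sk] by blast
      thus "small m (k * s n - k * L)" by (simp add: algebra_simps)
    qed
    thus "\<exists>N. \<forall>n\<ge>N. small m (k * s n - k * L)" by blast
  qed
qed

lemma fls_sums_scale: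
  fixes k :: "'b::field fls"
  assumes "fls_sums c S"
  shows "fls_sums (\<lambda>n. k * c n) (k * S)"
  using fls_lim_scale[OF assms[unfolded fls_sums_def], of k]
  by (simp add: fls_sums_def sum_distrib_left)

lemma div_cancel_aux: "(b::'b::field) \<noteq> 0 \<Longrightarrow> (b / a) * (c / b) = c / a"
  by (simp add: field_simps)

lemma hmap_analytic:
  assumes y: "y \<in> Zp CHAR('b)"
  shows "locally_analytic_U (hmap y :: 'b::{field,finite} fls \<Rightarrow> 'b fls)"
  unfolding locally_analytic_U_def
proof (intro ballI exI[of _ fls_X] conjI)
  fix \<alpha> :: "'b fls" assume a: "\<alpha> \<in> one_units"
  show "fls_X \<noteq> (0 :: 'b fls)" by simp
  have ballU: "u \<in> one_units" if "u \<in> fls_ball \<alpha> fls_X" for u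
  proof -
    have "small 1 (u - \<alpha>)" using that by (simp add: fls_ball_def)
    moreover have "small 1 (\<alpha> - 1)" using a by (simp add: one_units_def)
    ultimately have "small 1 ((u - \<alpha>) + (\<alpha> - 1))" by (rule small_add)
    thus ?thesis by (simp add: one_units_def)
  qed
  thus "fls_ball \<alpha> fls_X \<subseteq> one_units" by blast
  define A where "A = (Apow y :: 'b fps)"
  define c where "c n = hmap y \<alpha> * (fls_const (A $ n) * (fls_X / \<alpha>) ^ n)" for n
  have a0: "\<alpha> \<noteq> 0" and asd: "fls_subdegree \<alpha> = 0" using U_subdeg[OF a] by auto
  have sinv: "small 0 (inverse \<alpha>)" using asd by (simp add: small_def)
  have sX: "small 1 (fls_X :: 'b fls)" by (simp add: small_def)
  have sXa: "small 1 (fls_X / \<alpha>)" using small_mult[OF sX sinv] by (simp add: divide_inverse)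
  have cn: "small (int n) (c n)" for n
  proof -
    have "small (0 + (0 + int n * 1)) (hmap y \<alpha> * (fls_const (A $ n) * (fls_X / \<alpha>) ^ n))"
      by (intro small_mult small_const small_pow sXa U_subdeg(3) hmap_in_U a)
    thus ?thesis by (simp add: c_def)
  qed
  have clim: "fls_lim c 0"
    unfolding fls_lim_def
  proof
    fix m :: int
    have "\<forall>n\<ge>nat m. small m (c n - 0)"
    proof (intro allI impI)
      fix n assume "nat m \<le> n"
      hence "m \<le> int n" by (simp add: nat_le_iff)
      thus "small m (c n - 0)" using cn[of n] small_mono by simp
    qed
    thus "\<exists>N. \<forall>n\<ge>N. small m (c n - 0)" by blast
  qed
  show "analytic_on_ball (hmap y) \<alpha> fls_X"
    unfolding analytic_on_ball_def
  proof (intro exI[of _ c] conjI clim ballI)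
    fix u assume ub: "u \<in> fls_ball \<alpha> fls_X"
    have uU: "u \<in> one_units" by (rule ballU[OF ub])
    define w where "w = u / \<alpha>"
    have w1: "w - 1 = (u - \<alpha>) / \<alpha>" unfolding w_def using a0 by (simp add: field_simps)
    have "small (1 + 0) ((u - \<alpha>) * inverse \<alpha>)"
      by (intro small_mult sinv) (use ub in \<open>simp add: fls_ball_def\<close>)
    hence wU: "w \<in> one_units" using w1 by (simp add: one_units_def divide_inverse)
    have uw: "u = \<alpha> * w" unfolding w_def using a0 by simp
    have hu: "hmap y u = hmap y \<alpha> * Ev A w"
      unfolding uw using hmap_mult[OF y a wU] hmap_U[OF wU] A_def by simp
    have "fls_sums (\<lambda>n. hmap y \<alpha> * (fls_const (A $ n) * (w - 1) ^ n)) (hmap y \<alpha> * Ev A w)"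
      by (rule fls_sums_scale[OF Ev_sums[OF wU]])
    moreover have "hmap y \<alpha> * (fls_const (A $ n) * (w - 1) ^ n) = c n * ((u - \<alpha>) / fls_X) ^ n" for n
    proof -
      have "(fls_X / \<alpha>) ^ n * ((u - \<alpha>) / fls_X) ^ n = ((fls_X / \<alpha>) * ((u - \<alpha>) / fls_X)) ^ n"
        by (rule power_mult_distrib[symmetric])
      also have "(fls_X / \<alpha>) * ((u - \<alpha>) / fls_X) = (w - 1 :: 'b fls)"
        unfolding w1 by (rule div_cancel_aux) simp
      finally show ?thesis by (simp add: c_def mult.assoc)
    qed
    ultimately show "fls_sums (\<lambda>n. c n * ((u - \<alpha>) / fls_X) ^ n) (hmap y u)"
      unfolding hu by simp
  qed
qed

lemma hmap_Lambda0:
  assumes y: "y \<in> Zp_units CHAR('b)"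
  shows "(hmap y :: 'b::{field,finite} fls \<Rightarrow> 'b fls) \<in> Lambda0"
proof -
  have yZ: "y \<in> Zp CHAR('b)" using y by (simp add: Zp_units_def)
  show ?thesis unfolding Lambda0_def
    using hmap_bij[OF y] hmap_mult[OF yZ] hmap_analytic[OF yZ]
    by (auto simp: hmap_def)
qed

lemma hmap_inj: "inj_on (hmap :: _ \<Rightarrow> 'b::{field,finite} fls \<Rightarrow> 'b fls) (Zp_units CHAR('b))"
proof (rule inj_onI)
  fix y y' assume y: "y \<in> Zp_units CHAR('b)" and y': "y' \<in> Zp_units CHAR('b)"
    and eq: "(hmap y :: 'b fls \<Rightarrow> 'b fls) = hmap y'"
  have u: "1 + fps_to_fls fps_X \<in> (one_units :: 'b fls set)" and xu: "xr (1 + fps_to_fls fps_X) = (fps_X :: 'b fps)"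
    using x_U[of "fps_X :: 'b fps"] by auto
  have "fps_to_fls (Apow y :: 'b fps) = fps_to_fls (Apow y' :: 'b fps)"
    using fun_cong[OF eq, of "1 + fps_to_fls fps_X"] hmap_U[OF u] xu by (simp add: Ev_def)
  hence "(Apow y :: 'b fps) = Apow y'" by simp
  thus "y = y'" using Apow_inj y y' by (auto simp: Zp_units_def)
qed



lemma low_mult:
  fixes F G :: "'b::comm_ring_1 fps"
  assumes "\<forall>j<N. F$j = 0" "n < N"
  shows "(F*G)$n = 0" "(G*F)$n = 0"
  using assms by (auto simp: fps_mult_nth intro!: sum.neutral)

lemma HH_low:
  fixes H :: "'b::comm_ring_1 fps"
  assumes H: "\<forall>j<s. H$j = 0"
  shows "\<forall>n<2*s. (H*H)$n = 0"
proof (intro allI impI)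
  fix n assume n: "n < 2*s"
  show "(H*H)$n = 0" unfolding fps_mult_nth
  proof (intro sum.neutral ballI)
    fix j assume "j \<in> {0..n}"
    hence "j < s \<or> n - j < s" using n by auto
    thus "H$j * H$(n-j) = 0" using H by auto
  qed
qed

lemma binom_low:
  fixes H :: "'b::comm_ring_1 fps"
  assumes H: "\<forall>j<s. H$j = 0"
  shows "\<forall>n<2*s. ((fps_X + H)^i)$n = (fps_X^i + of_nat i * H * fps_X^(i-1))$n"
proof (induction i)
  case 0 thus ?case by simp
next
  case (Suc i)
  define Q where "Q = (fps_X^i + of_nat i * H * fps_X^(i-1) :: 'b fps)"
  have e1: "(fps_X + H) * Q = fps_X * fps_X^i + of_nat i * H * (fps_X * fps_X^(i-1)) + H * fps_X^i + of_nat i * (H*H) * fps_X^(i-1)"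
    unfolding Q_def by (simp only: distrib_left distrib_right mult_ac add_ac)
  have eq: "(fps_X + H) * Q = fps_X^Suc i + of_nat (Suc i) * H * fps_X^i + of_nat i * (H*H) * fps_X^(i-1)"
  proof (cases i)
    case 0 thus ?thesis unfolding e1 by simp
  next
    case (Suc i')
    have "fps_X * fps_X ^ (i - 1) = (fps_X ^ i :: 'b fps)" using Suc by (simp del: power_Suc add: power_Suc[symmetric])
    thus ?thesis unfolding e1 by (simp only: power_Suc of_nat_Suc distrib_right mult_1_left add_ac)
  qed
  show ?case
  proof (intro allI impI)
    fix n assume n: "n < 2*s"
    have "((fps_X + H)^Suc i)$n = ((fps_X + H) * (fps_X + H)^i)$n" by simp
    also have "\<dots> = ((fps_X + H) * Q)$n"
      by (rule mult_dep) (use Suc.IH n in \<open>auto simp: Q_def\<close>)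
    also have "\<dots> = (fps_X^Suc i + of_nat (Suc i) * H * fps_X^i)$n + (of_nat i * (H*H) * fps_X^(i-1))$n"
      unfolding eq by simp
    also have "(of_nat i * (H*H) * fps_X^(i-1) :: 'b fps)$n = 0"
    proof -
      have eqm: "(of_nat i * (H*H) * fps_X^(i-1) :: 'b fps) = (H*H) * (of_nat i * fps_X^(i-1))" by (simp only: mult_ac)
      show ?thesis unfolding eqm by (rule low_mult(1)[OF HH_low[OF H] n])
    qed
    finally show "((fps_X + H)^Suc i)$n = (fps_X^Suc i + of_nat (Suc i) * H * fps_X^(Suc i - 1))$n" by simp
  qed
qed

lemma taylor:
  fixes A H :: "'b::field fps"
  assumes H: "\<forall>j<s. H$j = 0" and s: "0 < s" and n: "n < 2*s"
  shows "(A oo (fps_X + H))$n = (A + H * fps_deriv A)$n"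
proof -
  define T where "T = (\<Sum>i\<in>{0..n+1}. fps_const (A$i) * fps_X^i)"
  have TA: "\<forall>j\<le>n+1. T$j = A$j"
    unfolding T_def by (auto simp: fps_sum_nth sum_delta_mult)
  have G0: "(fps_X + H) $ 0 = 0" using H s by simp
  have "(A oo (fps_X + H))$n = (T oo (fps_X + H))$n" by (rule comp_dep) (use TA in auto)
  also have "T oo (fps_X + H) = (\<Sum>i\<in>{0..n+1}. (fps_const (A$i) * fps_X^i) oo (fps_X + H))"
    unfolding T_def by (rule fps_compose_sum_distrib)
  also have "\<dots> = (\<Sum>i\<in>{0..n+1}. fps_const (A$i) * (fps_X + H)^i)"
    by (intro sum.cong refl) (simp add: fps_const_mult_apply_left[symmetric] fps_X_power_compose[OF G0])
  also have "(\<Sum>i\<in>{0..n+1}. fps_const (A$i) * (fps_X + H)^i) $ n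
      = (\<Sum>i\<in>{0..n+1}. fps_const (A$i) * (fps_X^i + of_nat i * H * fps_X^(i-1))) $ n"
    unfolding fps_sum_nth fps_mult_left_const_nth
    by (intro sum.cong refl) (simp only: binom_low[OF H, rule_format, OF n])
  also have "(\<Sum>i\<in>{0..n+1}. fps_const (A$i) * (fps_X^i + of_nat i * H * fps_X^(i-1))) = T + H * fps_deriv T"
  proof -
    have tm: "fps_const c * (fps_X^i + of_nat i * H * fps_X^(i-1)) = fps_const c * fps_X^i + H * fps_deriv (fps_const c * fps_X^i)" for c i
      by (simp only: fps_deriv_mult_const_left fps_deriv_power fps_deriv_fps_X fps_of_nat mult_1_right mult_1_left distrib_left mult_ac)
    show ?thesis unfolding T_def tm fps_deriv_sum by (simp only: sum.distrib sum_distrib_left)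
  qed
  also have "(T + H * fps_deriv T)$n = (A + H * fps_deriv A)$n"
  proof -
    have "(H * fps_deriv T)$n = (H * fps_deriv A)$n"
      by (rule mult_dep) (use TA in auto)
    thus ?thesis using TA by simp
  qed
  finally show ?thesis .
qed

lemma comp_Xe_low:
  fixes A :: "'b::field fps"
  assumes "A$0 = 1" "0 < e"
  shows "\<forall>j<2*e. (A oo fps_X^e)$j = (1 + fps_const (A$1) * fps_X^e)$j"
proof (intro allI impI)
  fix j assume j: "j < 2*e"
  show "(A oo fps_X^e)$j = (1 + fps_const (A$1) * fps_X^e)$j"
  proof (cases "e dvd j")
    case True
    then obtain q where q: "j = e * q" by blast
    have "q < 2" using j q assms(2) by simp
    hence "q = 0 \<or> q = 1" by auto
    thus ?thesis using q assms by (auto simp: X_pow_comp_nth)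
  next
    case False
    have "j \<noteq> 0" using False by (intro notI) simp
    moreover have "j \<noteq> e" using False by (intro notI) simp
    ultimately show ?thesis using False assms by (simp add: X_pow_comp_nth)
  qed
qed

lemma hom_ODE:
  fixes A :: "'b::field fps"
  assumes hom: "hom_fps A" and A0: "A$0 = 1"
  shows "(1 + fps_X) * fps_deriv A = fps_const (A$1) * A"
proof (rule fps_ext)
  fix k
  define e :: nat where "e = k + 3"
  define H where "H = (fps_X^e + fps_X^Suc e :: 'b fps)"
  have H: "\<forall>j<e. H$j = 0" unfolding H_def by (auto simp del: power_Suc)
  have e0: "0 < e" unfolding e_def by simp
  have ke: "k + e < 2*e" unfolding e_def by simp
  have "A oo (fps_X + fps_X^e + fps_X * fps_X^e) = (A oo fps_X) * (A oo fps_X^e)"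
    using hom e0 unfolding hom_fps_def by simp
  hence eq: "A oo (fps_X + H) = A * (A oo fps_X^e)" by (simp add: H_def add.assoc)
  have "(A oo (fps_X + H))$(k+e) = A$(k+e) + (H * fps_deriv A)$(k+e)"
    using taylor[OF H e0 ke, of A] by simp
  also have "(H * fps_deriv A)$(k+e) = fps_deriv A $ k + (fps_X * fps_deriv A) $ k"
  proof -
    have "H * fps_deriv A = fps_X^e * fps_deriv A + fps_X^e * (fps_X * fps_deriv A)"
      unfolding H_def by (simp add: algebra_simps)
    thus ?thesis by (simp add: fps_X_power_mult_nth)
  qed
  finally have L: "(A oo (fps_X + H))$(k+e) = A$(k+e) + ((1 + fps_X) * fps_deriv A) $ k"
    by (simp add: algebra_simps)
  have "(A * (A oo fps_X^e))$(k+e) = (A * (1 + fps_const (A$1) * fps_X^e))$(k+e)"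
    by (rule mult_dep) (use comp_Xe_low[OF A0 e0] ke in auto)
  also have "A * (1 + fps_const (A$1) * fps_X^e) = A + fps_const (A$1) * (fps_X^e * A)"
    by (simp add: algebra_simps)
  also have "(A + fps_const (A$1) * (fps_X^e * A))$(k+e) = A$(k+e) + A$1 * A$k"
    by (simp add: fps_X_power_mult_nth)
  finally show "((1 + fps_X) * fps_deriv A) $ k = (fps_const (A$1) * A) $ k"
    using L eq by simp
qed



lemma hom_pow:
  fixes A :: "'b::field fps"
  assumes hom: "hom_fps A" and A0: "A$0 = 1" and x0: "x$0 = 0"
  shows "A oo ((1 + x)^n - 1) = (A oo x)^n"
proof (induction n)
  case 0 thus ?case using A0 by simp
next
  case (Suc n)
  define w where "w = (1 + x)^n - 1"
  have w0: "w$0 = 0" unfolding w_def using x0 by (simp add: fps_power_zeroth)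
  have e: "(1 + x)^Suc n - 1 = w + x + w * x" unfolding w_def by (simp add: algebra_simps)
  have "A oo (w + x + w * x) = (A oo w) * (A oo x)"
    using hom w0 x0 unfolding hom_fps_def by blast
  hence "A oo ((1 + x)^Suc n - 1) = (A oo w) * (A oo x)" by (simp only: e)
  also have "\<dots> = (A oo x)^n * (A oo x)" using Suc.IH unfolding w_def by simp
  finally show ?case by (simp only: power_Suc mult.commute)
qed

lemma hom_frobc:
  fixes A :: "'b::{field,finite} fps"
  assumes hom: "hom_fps A" and A0: "A$0 = 1"
  shows "frobc A = A"
proof (rule fps_ext)
  fix n
  define p where "p = CHAR('b)"
  have p0: "0 < p" using p_ge2[where 'b='b] unfolding p_def by simp
  have e0: "(1 + fps_X :: 'b fps) ^ p = 1 + fps_X ^ p"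
    using one_plus_X_pow_char[where 'b='b, of 1] unfolding p_def by (simp only: power_one_right)
  have e: "(1 + fps_X :: 'b fps) ^ p - 1 = fps_X ^ p" unfolding e0 by (rule add_diff_cancel_left')
  have "A oo fps_X ^ p = A oo ((1 + fps_X) ^ p - 1)" by (simp only: e)
  also have "\<dots> = (A oo fps_X) ^ p" by (rule hom_pow[OF hom A0]) simp
  also have "\<dots> = A ^ p" by simp
  also have "\<dots> = frobc A oo fps_X ^ p" unfolding p_def by (rule fps_frob)
  finally have "(A oo fps_X ^ p) $ (p * n) = (frobc A oo fps_X ^ p) $ (p * n)" by simp
  thus "frobc A $ n = A $ n" using p0 by (simp add: X_pow_comp_nth)
qed

lemma of_nat_frob: "(of_nat i :: 'b::{field,finite}) ^ CHAR('b) = of_nat i"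
proof (induction i)
  case 0 thus ?case using p_ge2[where 'b='b] by (simp add: power_0_left)
next
  case (Suc i)
  have "(of_nat i + 1 :: 'b) ^ CHAR('b) = of_nat i ^ CHAR('b) + 1 ^ CHAR('b)"
    by (rule frob_add[OF prime_char])
  thus ?case using Suc.IH by (simp add: add.commute)
qed

lemma frob_fixed_prime_field:
  fixes x :: "'b::{field,finite}"
  assumes "x ^ CHAR('b) = x"
  shows "\<exists>i<CHAR('b). x = of_nat i"
proof -
  define p where "p = CHAR('b)"
  have p2: "2 \<le> p" unfolding p_def by (rule p_ge2)
  define Q where "Q = (monom 1 p - [:0, 1:] :: 'b poly)"
  have Qc: "coeff Q p = 1" unfolding Q_def using p2 by (simp add: coeff_pCons split: nat.split)
  hence Q0: "Q \<noteq> 0" by auto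
  have "degree Q \<le> max (degree (monom (1::'b) p)) (degree [:0, 1::'b:])"
    unfolding Q_def by (rule degree_diff_le_max)
  hence dQ: "degree Q \<le> p" using p2 by (simp add: degree_monom_eq)
  define S where "S = {x. poly Q x = 0}"
  have S: "S = {x. x ^ p = x}" unfolding S_def Q_def by (auto simp: poly_monom)
  have cS: "card S \<le> p" using card_poly_roots_bound[OF Q0] dQ unfolding S_def by simp
  have fS: "finite S" unfolding S_def by (rule poly_roots_finite[OF Q0])
  have sub: "of_nat ` {..<p} \<subseteq> S" unfolding S p_def using of_nat_frob by auto
  have inj: "inj_on (of_nat :: nat \<Rightarrow> 'b) {..<p}"
  proof (rule inj_onI)
    have main: "i = j" if "i < p" "j < p" "(of_nat i :: 'b) = of_nat j" "i \<le> j" for i j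
    proof -
      have "(of_nat (j - i) :: 'b) = 0" using that by (simp add: of_nat_diff)
      hence "p dvd (j - i)" unfolding p_def by (simp add: of_nat_eq_0_iff_char_dvd)
      moreover have "j - i < p" using that by simp
      ultimately show ?thesis using that by (metis dvd_imp_le le_antisym diff_is_0_eq neq0_conv not_less)
    qed
    fix i j assume "i \<in> {..<p}" "j \<in> {..<p}" "(of_nat i :: 'b) = of_nat j"
    thus "i = j" using main[of i j] main[of j i] by (cases "i \<le> j") auto
  qed
  have "card (of_nat ` {..<p} :: 'b set) = p" using card_image[OF inj] by simp
  moreover have "card (of_nat ` {..<p} :: 'b set) \<le> card S" by (rule card_mono[OF fS sub])
  ultimately have "card (of_nat ` {..<p} :: 'b set) = card S" using cS by simp
  hence "of_nat ` {..<p} = S" by (rule card_subset_eq[OF fS sub])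
  moreover have "x \<in> S" using assms unfolding S p_def by simp
  ultimately show ?thesis unfolding p_def by auto
qed

lemma hom_mult_fps:
  fixes A B :: "'b::field fps"
  assumes "hom_fps A" "hom_fps B"
  shows "hom_fps (A * B)"
  unfolding hom_fps_def
proof (intro allI impI)
  fix x z :: "'b fps" assume x: "x$0 = 0" and z: "z$0 = 0"
  have G0: "(x + z + x*z)$0 = 0" using x z by simp
  have hA: "A oo (x + z + x*z) = (A oo x) * (A oo z)" using assms(1) x z unfolding hom_fps_def by blast
  have hB: "B oo (x + z + x*z) = (B oo x) * (B oo z)" using assms(2) x z unfolding hom_fps_def by blast
  show "A * B oo (x + z + x*z) = (A * B oo x) * (A * B oo z)"
    unfolding fps_compose_mult_distrib[OF G0] fps_compose_mult_distrib[OF x] fps_compose_mult_distrib[OF z] hA hB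
    by (simp only: mult_ac)
qed

lemma hom_inverse_fps:
  fixes A :: "'b::field fps"
  assumes "hom_fps A" "A$0 \<noteq> 0"
  shows "hom_fps (inverse A)"
  unfolding hom_fps_def
proof (intro allI impI)
  fix x z :: "'b fps" assume x: "x$0 = 0" and z: "z$0 = 0"
  have G0: "(x + z + x*z)$0 = 0" using x z by simp
  have hA: "A oo (x + z + x*z) = (A oo x) * (A oo z)" using assms(1) x z unfolding hom_fps_def by blast
  show "inverse A oo (x + z + x*z) = (inverse A oo x) * (inverse A oo z)"
    unfolding fps_inverse_compose[OF G0 assms(2)] fps_inverse_compose[OF x assms(2)]
                  fps_inverse_compose[OF z assms(2)] hA fps_inverse_mult ..
qed



lemma hom_step:
  fixes A :: "'b::{field,finite} fps"
  assumes hom: "hom_fps A" and A0: "A$0 = 1"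
  shows "\<exists>y0<CHAR('b). \<exists>C. hom_fps C \<and> C$0 = 1 \<and> A = (1 + fps_X)^y0 * (C oo fps_X^CHAR('b))"
proof -
  define p where "p = CHAR('b)"
  have p2: "2 \<le> p" unfolding p_def by (rule p_ge2)
  have fA: "frobc A = A" by (rule hom_frobc[OF hom A0])
  have "(A$1)^CHAR('b) = A$1" using fps_nth_Abs_fps arg_cong[OF fA, of "\<lambda>F. F$1"] by (simp add: frobc_def)
  then obtain y0 where y0: "y0 < p" "A$1 = of_nat y0"
    using frob_fixed_prime_field unfolding p_def by blast
  define P where "P = (1 + fps_X :: 'b fps)^y0"
  have P0: "P$0 = 1" unfolding P_def by (simp add: pow1X_nth)
  define D where "D = inverse P * A"
  have AD: "A = P * D"
  proof -
    have "P * inverse P = 1" using P0 by (intro inverse_mult_eq_1') simp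
    hence "P * (inverse P * A) = A" by (simp add: mult.assoc[symmetric])
    thus ?thesis unfolding D_def by simp
  qed
  have dP: "(1 + fps_X) * fps_deriv P = of_nat y0 * P"
  proof (cases y0)
    case 0 thus ?thesis by (simp add: P_def)
  next
    case (Suc m)
    have "fps_deriv P = of_nat y0 * (1 + fps_X)^m"
      unfolding P_def fps_deriv_power' using Suc by simp
    hence "(1 + fps_X) * fps_deriv P = of_nat y0 * ((1 + fps_X) * (1 + fps_X)^m)" by (simp only: mult_ac)
    also have "(1 + fps_X) * (1 + fps_X)^m = P" unfolding P_def Suc by (rule power_Suc[symmetric])
    finally show ?thesis .
  qed
  have ODE: "(1 + fps_X) * fps_deriv A = of_nat y0 * A"
    using hom_ODE[OF hom A0] y0(2) by (simp add: fps_of_nat)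
  have "fps_deriv A = P * fps_deriv D + fps_deriv P * D" unfolding AD by (rule fps_deriv_mult)
  hence "(1 + fps_X) * fps_deriv A = ((1 + fps_X) * P) * fps_deriv D + ((1 + fps_X) * fps_deriv P) * D"
    by (simp only: distrib_left mult_ac)
  hence "of_nat y0 * (P * D) = ((1 + fps_X) * P) * fps_deriv D + (of_nat y0 * P) * D"
    unfolding ODE dP AD[symmetric] by (simp only: AD)
  hence z: "((1 + fps_X) * P) * fps_deriv D = 0" by (simp add: algebra_simps)
  have "((1 + fps_X) * P) $ 0 = 1" using P0 by simp
  hence "(1 + fps_X) * P \<noteq> 0" by auto
  hence dD: "fps_deriv D = 0" using z by simp
  have Dn: "D$n = 0" if "\<not> p dvd n" for n
  proof -
    have n0: "n \<noteq> 0" using that by (intro notI) simp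
    have "fps_deriv D $ (n - 1) = of_nat n * D$n" using n0 by simp
    hence "of_nat n * D$n = 0" using dD by simp
    moreover have "(of_nat n :: 'b) \<noteq> 0" using that unfolding p_def by (simp add: of_nat_eq_0_iff_char_dvd)
    ultimately show ?thesis by simp
  qed
  have D0: "D$0 = 1" unfolding D_def using P0 A0 by simp
  have homP: "hom_fps P" unfolding P_def by (rule hom_pow1X)
  have homD: "hom_fps D" unfolding D_def
    by (intro hom_mult_fps hom_inverse_fps homP hom) (simp add: P0)
  have fD: "frobc D = D" by (rule hom_frobc[OF homD D0])
  define C where "C = Abs_fps (\<lambda>n. D$(p*n))"
  have CD: "C oo fps_X^p = D"
  proof (rule fps_ext)
    fix k
    show "(C oo fps_X^p) $ k = D $ k"
    proof (cases "p dvd k")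
      case True thus ?thesis using p2 by (simp add: X_pow_comp_nth C_def)
    next
      case False thus ?thesis using p2 Dn by (simp add: X_pow_comp_nth)
    qed
  qed
  have C0: "C$0 = 1" unfolding C_def using D0 by simp
  have fC: "frobc C = C"
  proof (rule fps_ext)
    fix n
    have "frobc D $ (p*n) = D $ (p*n)" using fD by simp
    thus "frobc C $ n = C $ n" by (simp add: frobc_def C_def p_def)
  qed
  have Cp: "C^p = D"
  proof -
    have "C^p = frobc C oo fps_X^p" unfolding p_def by (rule fps_frob)
    thus ?thesis using fC CD by simp
  qed
  have homC: "hom_fps C"
    unfolding hom_fps_def
  proof (intro allI impI)
    fix x z :: "'b fps" assume x: "x$0 = 0" and z: "z$0 = 0"
    have G0: "(x + z + x*z)$0 = 0" using x z by simp
    have hD: "D oo (x + z + x*z) = (D oo x) * (D oo z)" using homD x z unfolding hom_fps_def by blast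
    have "(C oo (x + z + x*z))^p = C^p oo (x + z + x*z)" by (rule fps_compose_power[OF G0])
    also have "\<dots> = (D oo x) * (D oo z)" unfolding Cp by (rule hD)
    also have "\<dots> = (C^p oo x) * (C^p oo z)" unfolding Cp ..
    also have "\<dots> = ((C oo x) * (C oo z))^p"
      by (simp only: fps_compose_power[OF x, symmetric] fps_compose_power[OF z, symmetric] power_mult_distrib)
    finally have "(C oo (x + z + x*z))^CHAR('b fps) = ((C oo x) * (C oo z))^CHAR('b fps)"
      unfolding p_def by simp
    thus "C oo (x + z + x*z) = (C oo x) * (C oo z)"
      by (rule frob_inj[rotated]) (simp add: prime_char)
  qed
  show ?thesis
    using y0(1) homC C0 AD CD unfolding p_def P_def by blast
qed



lemma hom_iter:
  fixes A :: "'b::{field,finite} fps"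
  assumes hom: "hom_fps A" and A0: "A$0 = 1"
  shows "\<exists>Y<CHAR('b)^k. \<exists>B. hom_fps B \<and> B$0 = 1 \<and> A = (1 + fps_X)^Y * (B oo fps_X^(CHAR('b)^k))"
proof (induction k)
  case 0
  show ?case by (intro exI[of _ 0] conjI exI[of _ A]) (use hom A0 in simp_all)
next
  case (Suc k)
  define p where "p = CHAR('b)"
  have p2: "2 \<le> p" unfolding p_def by (rule p_ge2)
  define q where "q = p^k"
  have q0: "0 < q" unfolding q_def using p2 by simp
  obtain Y B where Y: "Y < q" and hB: "hom_fps B" and B0: "B$0 = 1"
    and AB: "A = (1 + fps_X)^Y * (B oo fps_X^q)"
    using Suc.IH unfolding q_def p_def by blast
  obtain y0 C where y0: "y0 < p" and hC: "hom_fps C" and C0: "C$0 = 1"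
    and BC: "B = (1 + fps_X)^y0 * (C oo fps_X^p)"
    using hom_step[OF hB B0] unfolding p_def by blast
  have Xq0: "(fps_X^q :: 'b fps)$0 = 0" using q0 by simp
  have Xp0: "(fps_X^p :: 'b fps)$0 = 0" using p2 by simp
  have "B oo fps_X^q = ((1 + fps_X)^y0 oo fps_X^q) * ((C oo fps_X^p) oo fps_X^q)"
    unfolding BC by (rule fps_compose_mult_distrib[OF Xq0])
  also have "(1 + fps_X :: 'b fps)^y0 oo fps_X^q = (1 + fps_X)^(q * y0)"
    unfolding q_def p_def by (rule one_plus_X_pow_char_mult[symmetric])
  also have "(C oo fps_X^p) oo fps_X^q = C oo (fps_X^p oo fps_X^q)"
    by (rule fps_compose_assoc[OF Xq0 Xp0, symmetric])
  also have "(fps_X^p oo fps_X^q :: 'b fps) = fps_X^(p^Suc k)"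
  proof -
    have "(fps_X^p oo fps_X^q :: 'b fps) = (fps_X^q)^p" by (rule fps_X_power_compose[OF Xq0])
    also have "\<dots> = fps_X^(q*p)" by (rule power_mult[symmetric])
    also have "q * p = p^Suc k" unfolding q_def by (simp add: mult.commute)
    finally show ?thesis .
  qed
  finally have "A = (1 + fps_X)^(Y + q * y0) * (C oo fps_X^(p^Suc k))"
    unfolding AB by (simp only: power_add mult.assoc)
  moreover have "Y + q * y0 < p ^ Suc k"
  proof -
    have "q * y0 \<le> q * (p - 1)" using y0 by (intro mult_le_mono2) simp
    moreover have "q * (p - 1) + q = q * p" using p2 by (simp add: algebra_simps)
    ultimately have "Y + q * y0 < q * p" using Y by linarith
    thus ?thesis unfolding q_def by (simp add: mult.commute)
  qed
  ultimately show ?case using hC C0 unfolding p_def by blast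
qed

lemma hom_low:
  fixes A :: "'b::{field,finite} fps"
  assumes hom: "hom_fps A" and A0: "A$0 = 1"
  shows "\<exists>Y<CHAR('b)^k. \<forall>n<CHAR('b)^k. A$n = ((1 + fps_X)^Y)$n"
proof -
  obtain Y B where Y: "Y < CHAR('b)^k" and B0: "B$0 = 1" and AB: "A = (1 + fps_X)^Y * (B oo fps_X^(CHAR('b)^k))"
    using hom_iter[OF hom A0, of k] by blast
  have q0: "0 < CHAR('b)^k" using p_ge2[where 'b='b] by simp
  have "\<forall>n<CHAR('b)^k. A$n = ((1 + fps_X)^Y)$n"
    using mod_X_pow_mult[OF comp_Xq_low[OF B0 q0]] AB by simp
  thus ?thesis using Y by blast
qed

definition Yk :: "'b::{field,finite} fps \<Rightarrow> nat \<Rightarrow> nat" where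
  "Yk A k = (THE Y. Y < CHAR('b)^k \<and> (\<forall>n<CHAR('b)^k. A$n = ((1 + fps_X :: 'b fps)^Y)$n))"

lemma Yk_prop:
  fixes A :: "'b::{field,finite} fps"
  assumes hom: "hom_fps A" and A0: "A$0 = 1"
  shows "Yk A k < CHAR('b)^k \<and> (\<forall>n<CHAR('b)^k. A$n = ((1 + fps_X :: 'b fps)^(Yk A k))$n)"
proof -
  have "\<exists>!Y. Y < CHAR('b)^k \<and> (\<forall>n<CHAR('b)^k. A$n = ((1 + fps_X :: 'b fps)^Y)$n)"
  proof (rule ex_ex1I)
    show "\<exists>Y. Y < CHAR('b)^k \<and> (\<forall>n<CHAR('b)^k. A$n = ((1 + fps_X :: 'b fps)^Y)$n)"
      using hom_low[OF hom A0, of k] by blast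
    fix Y Y' assume "Y < CHAR('b)^k \<and> (\<forall>n<CHAR('b)^k. A$n = ((1 + fps_X :: 'b fps)^Y)$n)"
      "Y' < CHAR('b)^k \<and> (\<forall>n<CHAR('b)^k. A$n = ((1 + fps_X :: 'b fps)^Y')$n)"
    thus "Y = Y'" by (intro pow1X_unique[where 'b='b and k=k]) auto
  qed
  thus ?thesis unfolding Yk_def by (rule theI')
qed

lemma Yk_unique:
  fixes A :: "'b::{field,finite} fps"
  assumes hom: "hom_fps A" and A0: "A$0 = 1"
    and Y: "Y < CHAR('b)^k" "\<forall>n<CHAR('b)^k. A$n = ((1 + fps_X :: 'b fps)^Y)$n"
  shows "Yk A k = Y"
  using Yk_prop[OF hom A0, of k] Y by (intro pow1X_unique[where 'b='b and k=k]) auto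

definition yA :: "'b::{field,finite} fps \<Rightarrow> nat \<Rightarrow> int" where
  "yA A = (\<lambda>k. int (Yk A k))"

lemma yA_Zp:
  fixes A :: "'b::{field,finite} fps"
  assumes hom: "hom_fps A" and A0: "A$0 = 1"
  shows "yA A \<in> Zp CHAR('b)"
  unfolding Zp_def
proof (intro CollectI allI conjI)
  fix k
  define p where "p = CHAR('b)"
  show "0 \<le> yA A k" by (simp add: yA_def)
  show "yA A k < int CHAR('b) ^ k" using Yk_prop[OF hom A0, of k]
    by (simp add: yA_def flip: of_nat_power)
  have p0: "0 < p^k" unfolding p_def using p_ge2[where 'b='b] by simp
  have "Yk A k = Yk A (Suc k) mod p^k"
  proof (rule Yk_unique[OF hom A0])
    show "Yk A (Suc k) mod p^k < CHAR('b)^k" using p0 unfolding p_def by simp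
    show "\<forall>n<CHAR('b)^k. A$n = ((1 + fps_X :: 'b fps)^(Yk A (Suc k) mod p^k))$n"
    proof (intro allI impI)
      fix n assume n: "n < CHAR('b)^k"
      hence n': "n < CHAR('b)^Suc k" using p_ge2[where 'b='b]
        by (meson less_le_trans power_increasing_iff le_SucI order.refl one_less_numeral_iff semiring_norm(76) le_trans Suc_1 power_increasing)
      have "A$n = ((1 + fps_X :: 'b fps)^(Yk A (Suc k)))$n" using Yk_prop[OF hom A0, of "Suc k"] n' by blast
      also have "\<dots> = ((1 + fps_X :: 'b fps)^(Yk A (Suc k) mod p^k))$n" unfolding p_def by (rule pow1X_mod[OF n])
      finally show "A$n = ((1 + fps_X :: 'b fps)^(Yk A (Suc k) mod p^k))$n" .
    qed
  qed
  thus "yA A k = yA A (Suc k) mod int CHAR('b) ^ k"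
    unfolding yA_def p_def by (simp add: of_nat_mod)
qed

lemma Apow_yA:
  fixes A :: "'b::{field,finite} fps"
  assumes hom: "hom_fps A" and A0: "A$0 = 1"
  shows "Apow (yA A) = A"
proof (rule fps_ext)
  fix n
  have n: "n < CHAR('b) ^ Suc n" by (rule n_less_p_pow)
  have "(Apow (yA A) :: 'b fps) $ n = ((1 + fps_X) ^ nat (yA A (Suc n))) $ n"
    by (rule Apow_nth[OF yA_Zp[OF hom A0] n])
  also have "\<dots> = A $ n" using Yk_prop[OF hom A0, of "Suc n"] n by (simp add: yA_def)
  finally show "(Apow (yA A) :: 'b fps) $ n = A $ n" .
qed



lemma fls_lim_bound:
  fixes c :: "nat \<Rightarrow> 'b::field fls"
  assumes "fls_lim c 0"
  shows "\<exists>B\<le>0. \<forall>n. small B (c n)"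
proof -
  obtain N where N: "\<forall>n\<ge>N. small 0 (c n)" using assms unfolding fls_lim_def by force
  have "\<exists>B. \<forall>n<M. small B (c n)" for M
  proof (induction M)
    case 0 thus ?case by simp
  next
    case (Suc M)
    then obtain B where B: "\<forall>n<M. small B (c n)" by blast
    define B' where "B' = min B (fls_subdegree (c M))"
    have "\<forall>n<Suc M. small B' (c n)"
    proof (intro allI impI)
      fix n assume "n < Suc M"
      hence "n < M \<or> n = M" by auto
      thus "small B' (c n)"
      proof
        assume "n < M" thus ?thesis using B small_mono[of B' B] unfolding B'_def by auto
      next
        assume "n = M" thus ?thesis unfolding B'_def small_def by auto
      qed
    qed
    thus ?case by blast
  qed
  then obtain B where B: "\<forall>n<N. small B (c n)" by blast
  show ?thesis
  proof (intro exI[of _ "min B 0"] conjI allI)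
    fix n
    show "small (min B 0) (c n)"
    proof (cases "n < N")
      case True thus ?thesis using B small_mono[of "min B 0" B] by auto
    next
      case False
      hence "small 0 (c n)" using N by simp
      thus ?thesis using small_mono[of "min B 0" 0] by simp
    qed
  qed simp
qed

lemma fls_sums_diff:
  fixes a b :: "nat \<Rightarrow> 'b::field fls"
  assumes "fls_sums a S" "fls_sums b T"
  shows "fls_sums (\<lambda>n. a n - b n) (S - T)"
  unfolding fls_sums_def fls_lim_iff
proof
  fix m :: int
  obtain N1 where N1: "\<forall>n\<ge>N1. \<forall>i<m. (\<Sum>k<n. a k) $$ i = S $$ i"
    using assms(1) unfolding fls_sums_def fls_lim_iff by blast
  obtain N2 where N2: "\<forall>n\<ge>N2. \<forall>i<m. (\<Sum>k<n. b k) $$ i = T $$ i"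
    using assms(2) unfolding fls_sums_def fls_lim_iff by blast
  have "\<forall>n\<ge>max N1 N2. \<forall>i<m. (\<Sum>k<n. a k - b k) $$ i = (S - T) $$ i"
  proof (intro allI impI)
    fix n i assume n: "max N1 N2 \<le> n" and i: "i < m"
    have "(\<Sum>k<n. a k - b k) $$ i = (\<Sum>k<n. a k) $$ i - (\<Sum>k<n. b k) $$ i"
      by (simp add: sum_subtractf)
    also have "\<dots> = S $$ i - T $$ i" using N1 N2 n i by simp
    finally show "(\<Sum>k<n. a k - b k) $$ i = (S - T) $$ i" by simp
  qed
  thus "\<exists>N. \<forall>n\<ge>N. \<forall>i<m. (\<Sum>k<n. a k - b k) $$ i = (S - T) $$ i" by blast
qed

lemma fls_frob_diff:
  fixes x y :: "'b::{field,finite} fls"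
  shows "(x - y) ^ CHAR('b) = x ^ CHAR('b) - y ^ CHAR('b)"
proof -
  have pr: "prime CHAR('b fls)" by (simp add: prime_char)
  have "(x + (-y)) ^ CHAR('b fls) = x ^ CHAR('b fls) + (-y) ^ CHAR('b fls)"
    by (rule frob_add[OF pr])
  also have "(-y) ^ CHAR('b fls) = - (y ^ CHAR('b fls))"
    using minus_power_prime_CHAR[OF refl pr] .
  finally show ?thesis by simp
qed

lemma fls_sums_frob:
  fixes a :: "nat \<Rightarrow> 'b::{field,finite} fls"
  assumes "fls_sums a S"
  shows "fls_sums (\<lambda>n. a n ^ CHAR('b)) (S ^ CHAR('b))"
  unfolding fls_sums_def fls_lim_def
proof
  fix m :: int
  define p where "p = CHAR('b)"
  have p2: "2 \<le> p" unfolding p_def by (rule p_ge2)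
  obtain N where N: "\<forall>n\<ge>N. small (max m 0) ((\<Sum>k<n. a k) - S)"
    using assms unfolding fls_sums_def fls_lim_def by blast
  have "\<forall>n\<ge>N. small m ((\<Sum>k<n. a k ^ p) - S ^ p)"
  proof (intro allI impI)
    fix n assume "N \<le> n"
    hence "small (int p * max m 0) (((\<Sum>k<n. a k) - S) ^ p)" using N small_pow by blast
    moreover have "((\<Sum>k<n. a k) - S) ^ p = (\<Sum>k<n. a k ^ p) - S ^ p"
    proof -
      have pr: "prime CHAR('b fls)" by (simp add: prime_char)
      have e: "(\<Sum>k<n. a k) ^ CHAR('b fls) = (\<Sum>k<n. a k ^ CHAR('b fls))"
        by (rule freshmans_dream_sum[OF pr refl])
      show ?thesis unfolding p_def fls_frob_diff using e by (simp only: semiring_char_fls)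
    qed
    moreover have "m \<le> int p * max m 0"
    proof -
      have "1 * max m 0 \<le> int p * max m 0" using p2 by (intro mult_right_mono) auto
      thus ?thesis by linarith
    qed
    ultimately show "small m ((\<Sum>k<n. a k ^ p) - S ^ p)" using small_mono[of m "int p * max m 0"] by simp
  qed
  thus "\<exists>N. \<forall>n\<ge>N. small m ((\<Sum>k<n. a k ^ CHAR('b)) - S ^ CHAR('b))" unfolding p_def by blast
qed


lemma IDP:
  fixes d :: "nat \<Rightarrow> 'b::field fls"
  assumes B: "\<forall>n. small B (d n)" and q: "0 < q"
    and S: "\<forall>j. fls_sums (\<lambda>n. d n * (fls_X ^ (q * j)) ^ n) 0"
  shows "d n = 0"
proof (rule ccontr)
  assume nz: "d n \<noteq> 0"
  define n0 where "n0 = (LEAST n. d n \<noteq> 0)"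
  have dn0: "d n0 \<noteq> 0" unfolding n0_def using nz by (rule LeastI)
  have below: "d i = 0" if "i < n0" for i using not_less_Least[OF that[unfolded n0_def]] by blast
  define v0 where "v0 = fls_subdegree (d n0)"
  have Bv: "B \<le> v0" using B[rule_format, of n0] dn0 unfolding small_def v0_def by auto
  define j where "j = nat (v0 - B) + 1"
  define E where "E = q * j"
  have "j \<le> E" unfolding E_def using q by simp
  hence EB: "v0 - B < int E" unfolding j_def by linarith
  define i0 where "i0 = v0 + int E * int n0"
  from S[rule_format, of j] obtain N where
    N: "\<forall>n'\<ge>N. \<forall>i<i0+1. (\<Sum>k<n'. d k * (fls_X^E)^k) $$ i = (0::'b fls) $$ i"
    unfolding fls_sums_def fls_lim_iff E_def by blast
  define N' where "N' = max N (Suc n0)"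
  have "(\<Sum>k<N'. d k * (fls_X^E)^k) $$ i0 = 0" using N unfolding N'_def by simp
  moreover have "(\<Sum>k<N'. d k * (fls_X^E)^k) $$ i0 = d n0 $$ v0"
  proof -
    have n0in: "n0 \<in> {..<N'}" by (simp add: N'_def)
    have "(\<Sum>k<N'. d k * (fls_X^E)^k) $$ i0 = (\<Sum>k\<in>{..<N'}. (d k * (fls_X^E)^k) $$ i0)"
      by (simp add: fls_nth_sum)
    also have "\<dots> = (d n0 * (fls_X^E)^n0) $$ i0 + (\<Sum>k\<in>{..<N'} - {n0}. (d k * (fls_X^E)^k) $$ i0)"
      by (rule sum.remove[OF _ n0in]) simp
    also have "(\<Sum>k\<in>{..<N'} - {n0}. (d k * (fls_X^E)^k) $$ i0) = 0"
    proof (rule sum.neutral, rule ballI)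
      fix k assume k: "k \<in> {..<N'} - {n0}"
      show "(d k * (fls_X^E)^k) $$ i0 = 0"
      proof (cases "k < n0")
        case True thus ?thesis using below by simp
      next
        case False
        hence kn: "Suc n0 \<le> k" using k by auto
        have sX: "small (int (E*k)) ((fls_X^E)^k :: 'b fls)"
          by (simp add: small_def power_mult[symmetric])
        have sm: "small (B + int (E*k)) (d k * (fls_X^E)^k)"
          by (rule small_mult[OF B[rule_format] sX])
        have "int E * int (Suc n0) \<le> int E * int k" using kn by (intro mult_left_mono) auto
        hence "i0 < B + int (E*k)" unfolding i0_def using EB by (simp add: algebra_simps)
        thus ?thesis using sm by (simp add: small_iff)
      qed
    qed
    also have "(d n0 * (fls_X^E)^n0) $$ i0 = d n0 $$ v0"
      by (simp add: power_mult[symmetric] fls_X_power_times_conv_shift i0_def mult.commute)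
    finally show ?thesis by simp
  qed
  moreover have "d n0 $$ v0 \<noteq> 0" unfolding v0_def using dn0 by simp
  ultimately show False by simp
qed

lemma frob_fixed_const:
  fixes a :: "'b::{field,finite} fls"
  assumes fa: "a ^ CHAR('b) = a"
  shows "a = fls_const (a $$ 0) \<and> (a $$ 0) ^ CHAR('b) = a $$ 0"
proof -
  define p where "p = CHAR('b)"
  have p2: "2 \<le> p" unfolding p_def by (rule p_ge2)
  have pr: "prime CHAR('b fls)" by (simp add: prime_char)
  show ?thesis
  proof (cases "a = 0")
    case True thus ?thesis using p2 unfolding p_def by simp
  next
    case False
    have "fls_subdegree (a ^ p) = int p * fls_subdegree a" by (rule fls_subdegree_pow)
    hence "fls_subdegree a = int p * fls_subdegree a" using fa unfolding p_def by simp
    hence sd: "fls_subdegree a = 0" using p2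
      by (metis mult_cancel_right1 mult_eq_0_iff of_nat_1 of_nat_eq_iff numeral_le_one_iff semiring_norm(69) le_antisym one_le_numeral)
    define r where "r = a - fls_const (a $$ 0)"
    have sr: "small 1 r" unfolding small_iff r_def
    proof (intro allI impI)
      fix i :: int assume "i < 1"
      hence "i < 0 \<or> i = 0" by auto
      thus "(a - fls_const (a $$ 0)) $$ i = 0" using sd by auto
    qed
    have ar: "a = fls_const (a $$ 0) + r" unfolding r_def by simp
    have fr: "(fls_const (a $$ 0) + r) ^ CHAR('b fls) = fls_const (a $$ 0) ^ CHAR('b fls) + r ^ CHAR('b fls)"
      by (rule frob_add[OF pr])
    have "a ^ p = fls_const (a $$ 0) ^ p + r ^ p"
      unfolding p_def using fr ar by (simp only: semiring_char_fls)
    hence ap: "a ^ p = fls_const ((a $$ 0) ^ p) + r ^ p" by (simp add: fls_const_power)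
    have srp: "small (int p * 1) (r ^ p)" by (rule small_pow[OF sr])
    hence "(r ^ p) $$ 0 = 0" using p2 by (simp add: small_iff)
    hence c0: "(a $$ 0) ^ p = a $$ 0" using arg_cong[OF ap, of "\<lambda>F. F $$ 0"] fa unfolding p_def by simp
    have "fls_const (a $$ 0) + r ^ p = fls_const (a $$ 0) + r" using ap c0 fa ar unfolding p_def by simp
    hence "r ^ p = r" by (rule add_left_imp_eq)
    have "r = 0"
    proof (rule ccontr)
      assume r0: "r \<noteq> 0"
      have "1 \<le> fls_subdegree r" using sr r0 by (simp add: small_def)
      moreover have "fls_subdegree (r ^ p) = int p * fls_subdegree r" by (rule fls_subdegree_pow)
      ultimately have "fls_subdegree r < fls_subdegree (r ^ p)" using p2
        by (simp add: mult_less_cancel_right1)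
      thus False using \<open>r ^ p = r\<close> by simp
    qed
    thus ?thesis using c0 ar unfolding p_def by simp
  qed
qed

lemma U_one: "1 \<in> one_units"
  by (simp add: one_units_def)

lemma U_pow: "u \<in> one_units \<Longrightarrow> u ^ n \<in> one_units"
  by (induction n) (auto simp: U_one U_mult(1))

lemma Ev_frob:
  fixes E :: "'b::{field,finite} fps"
  assumes fE: "frobc E = E" and u: "u \<in> one_units"
  shows "Ev E (u ^ CHAR('b)) = (Ev E u) ^ CHAR('b)"
proof -
  define p where "p = CHAR('b)"
  have p2: "2 \<le> p" unfolding p_def by (rule p_ge2)
  have pr: "prime CHAR('b fls)" by (simp add: prime_char)
  define x where "x = xr u"
  have x0: "x $ 0 = 0" unfolding x_def by (rule xr_U(2)[OF u])
  have ux: "u = 1 + fps_to_fls x" unfolding x_def by (rule xr_U(3)[OF u])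
  have "(1 + fps_to_fls x) ^ CHAR('b fls) = 1 ^ CHAR('b fls) + fps_to_fls x ^ CHAR('b fls)"
    by (rule frob_add[OF pr])
  hence "u ^ p = 1 ^ p + fps_to_fls x ^ p" unfolding p_def ux by (simp only: semiring_char_fls)
  hence up: "u ^ p = 1 + fps_to_fls (x ^ p)" by (simp add: fps_to_fls_power)
  have xp0: "(x ^ p) $ 0 = 0" using x0 p2 by (simp add: fps_power_zeroth)
  have xrp: "xr (u ^ p) = x ^ p" unfolding up by (rule x_U(2)[OF xp0])
  have Xp0: "(fps_X ^ p :: 'b fps) $ 0 = 0" using p2 by simp
  have "(E oo x) ^ p = E ^ p oo x" by (rule fps_compose_power[OF x0])
  also have "E ^ p = E oo fps_X ^ p" using fps_frob[of E] fE unfolding p_def by simp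
  also have "(E oo fps_X ^ p) oo x = E oo (fps_X ^ p oo x)" by (rule fps_compose_assoc[OF x0 Xp0, symmetric])
  also have "fps_X ^ p oo x = x ^ p" by (rule fps_X_power_compose[OF x0])
  finally have "(E oo x) ^ p = E oo x ^ p" .
  hence "fps_to_fls (E oo x ^ p) = fps_to_fls ((E oo x) ^ p)" by simp
  also have "\<dots> = fps_to_fls (E oo x) ^ p" by (rule fps_to_fls_power)
  finally show ?thesis unfolding Ev_def xrp p_def[symmetric] x_def[symmetric] .
qed

lemma Ev_frob_pow:
  fixes E :: "'b::{field,finite} fps"
  assumes fE: "frobc E = E" and u: "u \<in> one_units"
  shows "Ev E (u ^ (CHAR('b) ^ k)) = (Ev E u) ^ (CHAR('b) ^ k)"
proof (induction k)
  case 0 thus ?case by simp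
next
  case (Suc k)
  have "u ^ (CHAR('b) ^ Suc k) = (u ^ (CHAR('b) ^ k)) ^ CHAR('b)" by (simp add: power_mult[symmetric] mult.commute)
  hence "Ev E (u ^ (CHAR('b) ^ Suc k)) = (Ev E (u ^ (CHAR('b) ^ k))) ^ CHAR('b)"
    using Ev_frob[OF fE U_pow[OF u]] by simp
  also have "\<dots> = (Ev E u) ^ (CHAR('b) ^ Suc k)" unfolding Suc.IH by (simp add: power_mult[symmetric] mult.commute)
  finally show ?case .
qed

lemma frob_inj_pow:
  fixes a b :: "'b::{field,finite} fls"
  assumes "a ^ (CHAR('b) ^ k) = b ^ (CHAR('b) ^ k)"
  shows "a = b"
  using assms
proof (induction k arbitrary: a b)
  case 0 thus ?case by simp
next
  case (Suc k)
  have "(a ^ CHAR('b)) ^ (CHAR('b) ^ k) = (b ^ CHAR('b)) ^ (CHAR('b) ^ k)"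
    using Suc.prems by (simp add: power_mult[symmetric])
  hence "a ^ CHAR('b fls) = b ^ CHAR('b fls)" using Suc.IH by simp
  thus ?case by (rule frob_inj[rotated]) (simp add: prime_char)
qed



lemma L0_U: "f \<in> Lambda0 \<Longrightarrow> u \<in> one_units \<Longrightarrow> f u \<in> one_units"
  unfolding Lambda0_def using bij_betwE by blast

lemma L0_mult: "f \<in> Lambda0 \<Longrightarrow> u \<in> one_units \<Longrightarrow> v \<in> one_units \<Longrightarrow> f (u * v) = f u * f v"
  unfolding Lambda0_def by blast

lemma L0_one:
  fixes f :: "'b::field fls \<Rightarrow> 'b fls"
  assumes f: "f \<in> Lambda0" shows "f 1 = 1"
proof -
  have "f 1 = f 1 * f 1" using L0_mult[OF f U_one U_one] by simp
  moreover have "f 1 \<noteq> 0" using U_subdeg(1)[OF L0_U[OF f U_one]] .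
  ultimately show ?thesis by (metis mult_cancel_right1)
qed

lemma L0_pow:
  fixes f :: "'b::field fls \<Rightarrow> 'b fls"
  assumes f: "f \<in> Lambda0" and u: "u \<in> one_units"
  shows "f (u ^ n) = f u ^ n"
proof (induction n)
  case 0 thus ?case using L0_one[OF f] by simp
next
  case (Suc n)
  have "f (u ^ Suc n) = f (u * u ^ n)" by simp
  also have "\<dots> = f u * f (u ^ n)" by (rule L0_mult[OF f u U_pow[OF u]])
  finally show ?case using Suc.IH by simp
qed

lemma pow_aux1:
  fixes r x :: "'b::field fls"
  shows "(r ^ (p - 1) * (x ^ j) ^ p) ^ n = r ^ ((p - 1) * n) * (x ^ (p * j)) ^ n"
  by (simp add: power_mult_distrib power_mult[symmetric] mult_ac)

lemma pow_aux2:
  fixes c x :: "'b::field fls"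
  shows "(c * (x ^ j) ^ n) ^ p = c ^ p * (x ^ (p * j)) ^ n"
  by (simp add: power_mult_distrib power_mult[symmetric] mult_ac)


lemma analytic_key:
  fixes f :: "'b::{field,finite} fls \<Rightarrow> 'b fls"
  assumes f: "f \<in> Lambda0"
  shows "\<exists>E. hom_fps E \<and> E$0 = 1 \<and> (\<forall>u\<in>one_units. f u = Ev E u)"
proof -
  define p where "p = CHAR('b)"
  have p2: "2 \<le> p" unfolding p_def by (rule p_ge2)
  have la: "locally_analytic_U f" using f unfolding Lambda0_def by blast
  obtain \<rho> where \<rho>0: "\<rho> \<noteq> 0" and ballU: "fls_ball 1 \<rho> \<subseteq> one_units" and an: "analytic_on_ball f 1 \<rho>"
    using la U_one unfolding locally_analytic_U_def by blast
  obtain c where clim: "fls_lim c 0"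
    and csum: "\<forall>u\<in>fls_ball 1 \<rho>. fls_sums (\<lambda>n. c n * ((u - 1) / \<rho>) ^ n) (f u)"
    using an unfolding analytic_on_ball_def by blast
  define m where "m = fls_subdegree \<rho>"
  have sm1: "fls_subdegree (-1 :: 'b fls) = 0" by simp
  have m1: "1 \<le> m"
  proof (rule ccontr)
    assume "\<not> 1 \<le> m"
    hence "m \<le> 0" by simp
    hence "(0::'b fls) \<in> fls_ball 1 \<rho>" unfolding fls_ball_def RK_def m_def[symmetric]
      by (simp add: small_def)
    hence "(0::'b fls) \<in> one_units" using ballU by blast
    thus False by (simp add: one_units_def small_def)
  qed
  have s\<rho>: "small m \<rho>" by (simp add: small_def m_def)
  have ball_t: "1 + \<rho> * t \<in> fls_ball 1 \<rho>" if t: "small 0 t" for t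
  proof -
    have st: "small (m + 0) (\<rho> * t)" by (rule small_mult[OF s\<rho> t])
    hence "small 0 (\<rho> * t)" using m1 small_mono[of 0 m] by simp
    hence "small 0 (1 + \<rho> * t)" by (intro small_add) (simp_all add: small_def)
    thus ?thesis using st unfolding fls_ball_def RK_def m_def by simp
  qed
  have sum_t: "fls_sums (\<lambda>n. c n * t ^ n) (f (1 + \<rho> * t))" if t: "small 0 t" for t
  proof -
    have e: "((1 + \<rho> * t) - 1) / \<rho> = t" using \<rho>0 by simp
    have "fls_sums (\<lambda>n. c n * (((1 + \<rho> * t) - 1) / \<rho>) ^ n) (f (1 + \<rho> * t))"
      using csum ball_t[OF t] by blast
    thus ?thesis unfolding e .
  qed
  obtain B where B0: "B \<le> 0" and B: "\<forall>n. small B (c n)" using fls_lim_bound[OF clim] by blast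
  have s\<rho>0: "small 0 \<rho>" using s\<rho> m1 small_mono[of 0 m] by simp
  define d where "d n = c n * \<rho> ^ ((p - 1) * n) - c n ^ p" for n
  have dB: "small (int p * B) (d n)" for n
  proof -
    have "small (B + int ((p - 1) * n) * 0) (c n * \<rho> ^ ((p - 1) * n))"
      by (intro small_mult B[rule_format] small_pow s\<rho>0)
    moreover have "int p * B \<le> B"
    proof -
      have "int p * B \<le> 1 * B" by (rule mult_right_mono_neg) (use p2 B0 in auto)
      thus ?thesis by simp
    qed
    ultimately have "small (int p * B) (c n * \<rho> ^ ((p - 1) * n))" using small_mono by simp
    moreover have "small (int p * B) (c n ^ p)" by (rule small_pow[OF B[rule_format]])
    ultimately show ?thesis unfolding d_def by (rule small_diff)
  qed
  have dsum: "fls_sums (\<lambda>n. d n * (fls_X ^ (p * j)) ^ n) 0" for j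
  proof -
    define t where "t = (fls_X ^ j :: 'b fls)"
    have st: "small 0 t" unfolding t_def by (simp add: small_def)
    define t' where "t' = \<rho> ^ (p - 1) * t ^ p"
    have st': "small 0 t'"
    proof -
      have "small (int (p - 1) * 0 + int p * 0) t'" unfolding t'_def
        by (intro small_mult small_pow s\<rho>0 st)
      thus ?thesis by simp
    qed
    define u where "u = 1 + \<rho> * t"
    have uU: "u \<in> one_units" unfolding u_def using ballU ball_t[OF st] by blast
    have pr: "prime CHAR('b fls)" by (simp add: prime_char)
    have "(1 + \<rho> * t) ^ CHAR('b fls) = 1 ^ CHAR('b fls) + (\<rho> * t) ^ CHAR('b fls)"
      by (rule frob_add[OF pr])
    hence "u ^ p = 1 + (\<rho> * t) ^ p" unfolding u_def p_def by (simp only: semiring_char_fls power_one)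
    also have "(\<rho> * t) ^ p = \<rho> * t'"
    proof -
      have "\<rho> ^ p = \<rho> * \<rho> ^ (p - 1)" using p2 by (cases p) simp_all
      thus ?thesis unfolding t'_def by (simp add: power_mult_distrib mult.assoc)
    qed
    finally have up: "u ^ p = 1 + \<rho> * t'" .
    have s1: "fls_sums (\<lambda>n. c n * t' ^ n) (f (u ^ p))" unfolding up by (rule sum_t[OF st'])
    have s2: "fls_sums (\<lambda>n. (c n * t ^ n) ^ p) (f u ^ p)"
      unfolding p_def u_def by (rule fls_sums_frob[OF sum_t[OF st]])
    have "fls_sums (\<lambda>n. c n * t' ^ n - (c n * t ^ n) ^ p) (f (u ^ p) - f u ^ p)"
      by (rule fls_sums_diff[OF s1 s2])
    moreover have "f (u ^ p) - f u ^ p = 0" using L0_pow[OF f uU] by simp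
    moreover have "c n * t' ^ n - (c n * t ^ n) ^ p = d n * (fls_X ^ (p * j)) ^ n" for n
    proof -
      have e1: "t' ^ n = \<rho> ^ ((p - 1) * n) * (fls_X ^ (p * j)) ^ n" unfolding t'_def t_def by (rule pow_aux1)
      have e2: "(c n * t ^ n) ^ p = c n ^ p * (fls_X ^ (p * j)) ^ n" unfolding t_def by (rule pow_aux2)
      show ?thesis unfolding e1 e2 d_def by (simp only: left_diff_distrib mult.assoc)
    qed
    ultimately show ?thesis by simp
  qed
  have d0: "d n = 0" for n
    by (rule IDP[where q=p, OF allI[OF dB] _ allI[OF dsum]]) (use p2 in simp)
  define a where "a n = c n / \<rho> ^ n" for n
  have ap: "a n ^ p = a n" for n
  proof -
    have cp: "c n ^ p = c n * \<rho> ^ ((p - 1) * n)" using d0[of n] unfolding d_def by simp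
    have rp: "(\<rho> ^ n) ^ p = \<rho> ^ ((p - 1) * n) * \<rho> ^ n"
    proof -
      have "(p - 1) * n + n = n * p" using p2 by (simp add: algebra_simps)
      thus ?thesis by (simp add: power_mult[symmetric] power_add[symmetric])
    qed
    have "a n ^ p = c n ^ p / (\<rho> ^ n) ^ p" unfolding a_def by (rule power_divide)
    also have "\<dots> = (c n * \<rho> ^ ((p - 1) * n)) / (\<rho> ^ ((p - 1) * n) * \<rho> ^ n)" unfolding cp rp ..
    also have "\<dots> = a n" unfolding a_def using \<rho>0 by simp
    finally show ?thesis .
  qed
  define E where "E = Abs_fps (\<lambda>n. a n $$ 0)"
  have aE: "a n = fls_const (E $ n)" for n
    using frob_fixed_const[of "a n"] ap[of n] unfolding E_def p_def by simp
  have fE: "frobc E = E"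
  proof (rule fps_ext)
    fix n show "frobc E $ n = E $ n"
      using frob_fixed_const[of "a n"] ap[of n] unfolding E_def p_def frobc_def by simp
  qed
  have near: "f u = Ev E u" if uU: "u \<in> one_units" and um: "small m (u - 1)" for u
  proof -
    define t where "t = (u - 1) / \<rho>"
    have "small (m + - m) ((u - 1) * inverse \<rho>)"
      by (intro small_mult um) (simp add: small_def m_def)
    hence st: "small 0 t" unfolding t_def by (simp add: divide_inverse)
    have ut: "u = 1 + \<rho> * t" unfolding t_def using \<rho>0 by simp
    have "fls_sums (\<lambda>n. c n * t ^ n) (f u)" using sum_t[OF st] ut by simp
    moreover have "c n * t ^ n = fls_const (E $ n) * (u - 1) ^ n" for n
    proof -
      have "c n = a n * \<rho> ^ n" unfolding a_def using \<rho>0 by simp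
      hence "c n * t ^ n = a n * (\<rho> * t) ^ n" by (simp add: power_mult_distrib mult.assoc)
      also have "\<rho> * t = u - 1" unfolding t_def using \<rho>0 by simp
      finally show ?thesis using aE by simp
    qed
    ultimately have "fls_sums (\<lambda>n. fls_const (E $ n) * (u - 1) ^ n) (f u)" by simp
    thus ?thesis using Ev_sums[OF uU, of E] fls_sums_unique by blast
  qed
  have all: "f u = Ev E u" if uU: "u \<in> one_units" for u
  proof -
    define K where "K = nat m"
    define q where "q = p ^ K"
    have "K < 2 ^ K" by (rule less_exp)
    also have "(2::nat) ^ K \<le> p ^ K" using p2 by (rule power_mono) simp
    finally have Kq: "K < q" unfolding q_def .
    have mq: "m \<le> int q * 1" using Kq m1 unfolding K_def by linarith
    have pr: "prime CHAR('b fls)" by (simp add: prime_char)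
    have "((u - 1) + 1) ^ q = (u - 1) ^ q + 1 ^ q"
      by (rule freshmans_dream'[OF pr]) (simp add: q_def p_def)
    hence uq: "u ^ q - 1 = (u - 1) ^ q" by simp
    have "small (int q * 1) ((u - 1) ^ q)" by (rule small_pow) (use uU in \<open>simp add: one_units_def\<close>)
    hence "small m (u ^ q - 1)" unfolding uq using small_mono[OF mq] by blast
    hence "f (u ^ q) = Ev E (u ^ q)" by (rule near[OF U_pow[OF uU]])
    hence "f u ^ q = Ev E u ^ q" unfolding L0_pow[OF f uU] q_def p_def Ev_frob_pow[OF fE uU] .
    thus ?thesis unfolding q_def p_def by (rule frob_inj_pow)
  qed
  have homE: "hom_fps E"
    unfolding hom_fps_def
  proof (intro allI impI)
    fix x z :: "'b fps" assume x: "x$0 = 0" and z: "z$0 = 0"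
    define u where "u = 1 + fps_to_fls x"
    define v where "v = 1 + fps_to_fls z"
    have uU: "u \<in> one_units" and xu: "xr u = x" unfolding u_def using x_U[OF x] by auto
    have vU: "v \<in> one_units" and zv: "xr v = z" unfolding v_def using x_U[OF z] by auto
    have "Ev E (u * v) = Ev E u * Ev E v"
      using L0_mult[OF f uU vU] all[OF uU] all[OF vU] all[OF U_mult(1)[OF uU vU]] by simp
    hence "fps_to_fls (E oo (x + z + x*z)) = fps_to_fls ((E oo x) * (E oo z))"
      unfolding Ev_def U_mult(2)[OF uU vU] xu zv by (simp add: fls_times_fps_to_fls)
    thus "E oo (x + z + x*z) = (E oo x) * (E oo z)" by simp
  qed
  have E0: "E$0 = 1"
  proof -
    have "Ev E 1 = 1" using all[OF U_one] L0_one[OF f] by simp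
    moreover have "Ev E 1 = fls_const (E$0)" by (simp add: Ev_def xr_def)
    ultimately show ?thesis by simp
  qed
  show ?thesis using homE E0 all by blast
qed



lemma surj_hmap:
  fixes f :: "'b::{field,finite} fls \<Rightarrow> 'b fls"
  assumes f: "f \<in> Lambda0"
  shows "\<exists>y\<in>Zp_units CHAR('b). f = hmap y"
proof -
  obtain E where homE: "hom_fps E" and E0: "E$0 = 1" and fE: "\<forall>u\<in>one_units. f u = Ev E u"
    using analytic_key[OF f] by blast
  define y where "y = yA E"
  have yZ: "y \<in> Zp CHAR('b)" unfolding y_def by (rule yA_Zp[OF homE E0])
  have Ay: "Apow y = E" unfolding y_def by (rule Apow_yA[OF homE E0])
  have y1: "y 1 \<noteq> 0"
  proof
    assume "y 1 = 0"
    hence Y0: "Yk E 1 = 0" unfolding y_def yA_def by simp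
    have "1 < CHAR('b)" using p_ge2[where 'b='b] by simp
    hence E1: "E$1 = 0" using Yk_prop[OF homE E0, of 1] Y0 by (simp add: pow1X_nth)
    have XU: "1 + fls_X \<in> (one_units :: 'b fls set)" using x_U(1)[of "fps_X :: 'b fps"] by simp
    have "bij_betw f one_units one_units" using f unfolding Lambda0_def by blast
    hence "f ` one_units = one_units" by (simp add: bij_betw_def)
    then obtain u where uU: "u \<in> one_units" and fu: "f u = 1 + fls_X" using XU by (metis imageE)
    define x where "x = xr u"
    have x0: "x$0 = 0" unfolding x_def by (rule xr_U(2)[OF uU])
    have "(E oo x) $ 1 = (\<Sum>i\<in>{0..1}. E$i * (x^i) $ 1)" by (rule fps_compose_nth)
    also have "\<dots> = 0" using E1 by (simp add: x0)
    finally have "fps_to_fls (E oo x) $$ 1 = 0" by simp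
    moreover have "fps_to_fls (E oo x) = 1 + fls_X"
      using fE uU fu unfolding Ev_def x_def by simp
    ultimately show False by simp
  qed
  have yU: "y \<in> Zp_units CHAR('b)" using yZ y1 by (simp add: Zp_units_def)
  have "f = hmap y"
  proof
    fix u
    show "f u = hmap y u"
    proof (cases "u \<in> one_units")
      case True thus ?thesis using fE hmap_U[OF True, of y] Ay by simp
    next
      case False
      have "f \<in> extensional one_units" using f unfolding Lambda0_def by blast
      thus ?thesis using False by (simp add: hmap_def extensional_def)
    qed
  qed
  thus ?thesis using yU by blast
qed

theorem corollary1p2:
  shows "(\<lambda>y. restrict (Zp_pow y) (one_units :: ('a::{field,finite}) fls set))
           \<in> iso (Zp_units_group CHAR('a)) (Lambda0_group :: ('a fls \<Rightarrow> 'a fls) monoid)"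
proof -
  have h: "(\<lambda>y. restrict (Zp_pow y) (one_units :: 'a fls set)) = hmap"
    by (simp add: hmap_def fun_eq_iff)
  have hom: "hmap \<in> hom (Zp_units_group CHAR('a)) (Lambda0_group :: ('a fls \<Rightarrow> 'a fls) monoid)"
    unfolding hom_def
  proof (intro CollectI conjI ballI)
    show "hmap \<in> carrier (Zp_units_group CHAR('a)) \<rightarrow> carrier (Lambda0_group :: ('a fls \<Rightarrow> 'a fls) monoid)"
      using hmap_Lambda0 by (auto simp: Zp_units_group_def Lambda0_group_def)
    fix y z assume y: "y \<in> carrier (Zp_units_group CHAR('a))" and z: "z \<in> carrier (Zp_units_group CHAR('a))"
    have yZ: "y \<in> Zp CHAR('a)" and zZ: "z \<in> Zp CHAR('a)"
      using y z by (auto simp: Zp_units_group_def Zp_units_def)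
    show "(hmap (y \<otimes>\<^bsub>Zp_units_group CHAR('a)\<^esub> z) :: 'a fls \<Rightarrow> 'a fls) = hmap y \<otimes>\<^bsub>Lambda0_group\<^esub> hmap z"
    proof
      fix u :: "'a fls"
      show "hmap (y \<otimes>\<^bsub>Zp_units_group CHAR('a)\<^esub> z) u = (hmap y \<otimes>\<^bsub>Lambda0_group\<^esub> hmap z) u"
      proof (cases "u \<in> one_units")
        case True thus ?thesis
          using hmap_comp[OF yZ zZ True] by (simp add: Zp_units_group_def Lambda0_group_def)
      next
        case False thus ?thesis by (simp add: Zp_units_group_def Lambda0_group_def hmap_def)
      qed
    qed
  qed
  have bij: "bij_betw hmap (carrier (Zp_units_group CHAR('a))) (carrier (Lambda0_group :: ('a fls \<Rightarrow> 'a fls) monoid))"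
    unfolding bij_betw_def
  proof
    show "inj_on (hmap :: _ \<Rightarrow> 'a fls \<Rightarrow> 'a fls) (carrier (Zp_units_group CHAR('a)))"
      unfolding Zp_units_group_def partial_object.simps by (rule hmap_inj)
    show "hmap ` carrier (Zp_units_group CHAR('a)) = carrier (Lambda0_group :: ('a fls \<Rightarrow> 'a fls) monoid)"
    proof
      show "hmap ` carrier (Zp_units_group CHAR('a)) \<subseteq> carrier (Lambda0_group :: ('a fls \<Rightarrow> 'a fls) monoid)"
        using hmap_Lambda0 by (auto simp: Zp_units_group_def Lambda0_group_def)
      show "carrier (Lambda0_group :: ('a fls \<Rightarrow> 'a fls) monoid) \<subseteq> hmap ` carrier (Zp_units_group CHAR('a))"
        using surj_hmap by (auto simp: Zp_units_group_def Lambda0_group_def)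
    qed
  qed
  show ?thesis unfolding h iso_def using hom bij by blast
qed


end
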